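(* Let $f:\mathbb{R}^n\to(-\infty,+\infty]$ be proper, lower semicontinuous and prox-bounded with threshold $\lambda_f>0$, and let $g:\mathbb{R}^n\to\mathbb{R}$ be convex and differentiable with Lipschitz continuous gradient. Suppose $f$ is variationally convex at $\bar x$ for $-\nabla g(\bar x)\in\partial f(\bar x)$. For $\lambda>0$ let $T:=P_\lambda f\circ(\mathrm{Id}-\lambda\nabla g)$. Then $\bar x$ is a local minimizer of $f+g$, and there exists $0<\bar\lambda\le\lambda_f$ such that: (i) for every $\lambda\in(0,\bar\lambda)$ there is a neighborhood $U_\lambda$ of $\bar x$ such that $T$ maps $U_\lambda$ into $U_\lambda$ (single-valuedly), $T$ is averaged on $U_\lambda$, and $T(\bar x)=\bar x$; (ii) for $x_1\in U_\lambda$, the sequence $x_{k+1}:=Tx_k$ converges to some $x^*\in U_\lambda$ satisfying $0\in\nabla g(x^* )+\partial_p^\lambda f(x^* )$; (iii) if in addition $f$ is variationally strongly convex at $\bar x$ for $-\nabla g(\bar x)$, then, after choosing a smaller neighborhood $U_\lambda$, the sequence in (ii) converges linearly to $\bar x$.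
   Context: $P_\lambda f(x):=\operatorname{argmin}_y\{f(y)+\frac1{2\lambda}\|y-x\|^2\}$; $e_\lambda f$ the corresponding infimal value. Prox-bounded with threshold $\lambda_f$: $\lambda_f=\sup\{\lambda>0: e_\lambda f(x)>-\infty\text{ for some }x\}>0$. $v\in\partial_p^\lambda f(x)$ iff $x\in\operatorname{dom}f$ and $f(y)\ge f(x)+\langle v,y-x\rangle-\frac1{2\lambda}\|y-x\|^2$ for all $y$. $\partial f$ is the limiting subdifferential. Variational convexity of $f$ at $\bar x$ for $\bar v\in\partial f(\bar x)$: for some convex neighborhood $U\times V$ of $(\bar x,\bar v)$ there are a lsc convex $\varphi\le f$ on $U$ and $\varepsilon>0$ with $[U_\varepsilon\times V]\cap\operatorname{gph}\partial f=[U\times V]\cap\operatorname{gph}\partial\varphi$ and $f=\varphi$ at common elements, $U_\varepsilon=\{x\in U:f(x)<f(\bar x)+\varepsilon\}$; variational strong convexity is the same with $\varphi$ strongly convex (with some modulus $\sigma>0$). $T$ averaged on $U$: $T=(1-\alpha)\mathrm{Id}+\alpha N$ for some $\alpha\in(0,1)$ and $N$ nonexpansive on $U$. *)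

theory Defs
  imports "HOL-Analysis.Analysis"
begin

text \<open>Extended-real valued functions f :: 'a \<Rightarrow> ereal on a Euclidean space 'a (= R^n).
  Functions into (-inf,+inf] are modelled by ereal-valued functions never taking -inf.\<close>

definition proper_fun :: "('a \<Rightarrow> ereal) \<Rightarrow> bool" where
  "proper_fun f \<longleftrightarrow> (\<forall>x. f x \<noteq> -\<infinity>) \<and> (\<exists>x. f x < \<infinity>)"

definition lsc_fun :: "('a::topological_space \<Rightarrow> ereal) \<Rightarrow> bool" where
  "lsc_fun f \<longleftrightarrow> (\<forall>x c. c < f x \<longrightarrow> eventually (\<lambda>y. c < f y) (nhds x))"

definition ereal_convex :: "('a::real_vector \<Rightarrow> ereal) \<Rightarrow> bool" where
  "ereal_convex \<phi> \<longleftrightarrow> (\<forall>x y t. 0 < t \<and> t < 1 \<longrightarrow>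
      \<phi> ((1 - t) *\<^sub>R x + t *\<^sub>R y) \<le> ereal (1 - t) * \<phi> x + ereal t * \<phi> y)"

definition ereal_strongly_convex :: "real \<Rightarrow> ('a::real_normed_vector \<Rightarrow> ereal) \<Rightarrow> bool" where
  "ereal_strongly_convex \<sigma> \<phi> \<longleftrightarrow> ereal_convex (\<lambda>x. \<phi> x - ereal (\<sigma> / 2 * (norm x)\<^sup>2))"

definition moreau_env :: "real \<Rightarrow> ('a::real_normed_vector \<Rightarrow> ereal) \<Rightarrow> 'a \<Rightarrow> ereal" where
  "moreau_env lam f x = (INF y. f y + ereal ((norm (y - x))\<^sup>2 / (2 * lam)))"

definition prox_map :: "real \<Rightarrow> ('a::real_normed_vector \<Rightarrow> ereal) \<Rightarrow> 'a \<Rightarrow> 'a set" where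
  "prox_map lam f x = {y. \<forall>z. f y + ereal ((norm (y - x))\<^sup>2 / (2 * lam))
                           \<le> f z + ereal ((norm (z - x))\<^sup>2 / (2 * lam))}"

definition prox_bounded :: "('a::real_normed_vector \<Rightarrow> ereal) \<Rightarrow> bool" where
  "prox_bounded f \<longleftrightarrow> (\<exists>lam>0. \<exists>x. moreau_env lam f x > -\<infinity>)"

definition prox_threshold :: "('a::real_normed_vector \<Rightarrow> ereal) \<Rightarrow> ereal" where
  "prox_threshold f = Sup {ereal lam | lam. lam > 0 \<and> (\<exists>x. moreau_env lam f x > -\<infinity>)}"

definition prox_subdiff :: "real \<Rightarrow> ('a::real_inner \<Rightarrow> ereal) \<Rightarrow> 'a \<Rightarrow> 'a set" where
  "prox_subdiff lam f x = {v. f x < \<infinity> \<and>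
     (\<forall>y. f y \<ge> f x + ereal (inner v (y - x) - (norm (y - x))\<^sup>2 / (2 * lam)))}"

definition frechet_subdiff :: "('a::real_inner \<Rightarrow> ereal) \<Rightarrow> 'a \<Rightarrow> 'a set" where
  "frechet_subdiff f x = {v. \<bar>f x\<bar> \<noteq> \<infinity> \<and>
     (\<forall>e>0. \<exists>d>0. \<forall>y. norm (y - x) < d \<longrightarrow>
        f y \<ge> f x + ereal (inner v (y - x) - e * norm (y - x)))}"

definition limiting_subdiff :: "('a::real_inner \<Rightarrow> ereal) \<Rightarrow> 'a \<Rightarrow> 'a set" where
  "limiting_subdiff f x = {v. \<exists>xs vs. xs \<longlonglongrightarrow> x \<and> (\<lambda>k. f (xs k)) \<longlonglongrightarrow> f x \<and>
     (\<forall>k. vs k \<in> frechet_subdiff f (xs k)) \<and> vs \<longlonglongrightarrow> v}"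

definition var_convex_with :: "(('a::real_inner \<Rightarrow> ereal) \<Rightarrow> bool) \<Rightarrow> ('a \<Rightarrow> ereal) \<Rightarrow> 'a \<Rightarrow> 'a \<Rightarrow> bool" where
  "var_convex_with Q f xb vb \<longleftrightarrow> vb \<in> limiting_subdiff f xb \<and>
    (\<exists>U V \<phi> \<epsilon>. convex U \<and> convex V \<and> xb \<in> interior U \<and> vb \<in> interior V \<and>
       (\<forall>x. \<phi> x \<noteq> -\<infinity>) \<and> lsc_fun \<phi> \<and> Q \<phi> \<and> (\<forall>x\<in>U. \<phi> x \<le> f x) \<and> \<epsilon> > 0 \<and>
       (\<forall>x v. (x \<in> U \<and> f x < f xb + ereal \<epsilon> \<and> v \<in> V \<and> v \<in> limiting_subdiff f x)
              \<longleftrightarrow> (x \<in> U \<and> v \<in> V \<and> v \<in> limiting_subdiff \<phi> x)) \<and>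
       (\<forall>x v. x \<in> U \<and> v \<in> V \<and> v \<in> limiting_subdiff \<phi> x \<longrightarrow> f x = \<phi> x))"

definition var_convex :: "('a::real_inner \<Rightarrow> ereal) \<Rightarrow> 'a \<Rightarrow> 'a \<Rightarrow> bool" where
  "var_convex f xb vb \<longleftrightarrow> var_convex_with ereal_convex f xb vb"

definition var_strongly_convex :: "('a::real_inner \<Rightarrow> ereal) \<Rightarrow> 'a \<Rightarrow> 'a \<Rightarrow> bool" where
  "var_strongly_convex f xb vb \<longleftrightarrow>
     var_convex_with (\<lambda>\<phi>. \<exists>\<sigma>>0. ereal_strongly_convex \<sigma> \<phi>) f xb vb"

definition fb_averaged_on :: "real \<Rightarrow> ('a::euclidean_space \<Rightarrow> ereal) \<Rightarrow> ('a \<Rightarrow> 'a) \<Rightarrow> 'a set \<Rightarrow> bool" where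
  "fb_averaged_on lam f G U \<longleftrightarrow>
    (\<forall>x\<in>U. \<exists>y\<in>U. prox_map lam f (x - lam *\<^sub>R G x) = {y}) \<and>
    (\<exists>\<alpha> N. 0 < \<alpha> \<and> \<alpha> < 1 \<and> (\<forall>x\<in>U. \<forall>y\<in>U. norm (N x - N y) \<le> norm (x - y)) \<and>
       (\<forall>x\<in>U. prox_map lam f (x - lam *\<^sub>R G x) = {(1 - \<alpha>) *\<^sub>R x + \<alpha> *\<^sub>R N x}))"

definition fb_seq :: "real \<Rightarrow> ('a::euclidean_space \<Rightarrow> ereal) \<Rightarrow> ('a \<Rightarrow> 'a) \<Rightarrow> (nat \<Rightarrow> 'a) \<Rightarrow> bool" where
  "fb_seq lam f G xs \<longleftrightarrow> (\<forall>k. prox_map lam f (xs k - lam *\<^sub>R G (xs k)) = {xs (Suc k)})"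

end

theory Submission
  imports Defs "HOL-Analysis.Analysis"
begin

lemma line_deriv:
  fixes g :: "'a::euclidean_space \<Rightarrow> real"
  assumes g_grad: "\<And>x. (g has_derivative (\<lambda>h. inner (G x) h)) (at x)"
  shows "((\<lambda>t. g (x + t *\<^sub>R h)) has_derivative (\<lambda>s. s * inner (G (x + t *\<^sub>R h)) h)) (at t within S)"
proof -
  have d1: "((\<lambda>t. x + t *\<^sub>R h) has_derivative (\<lambda>s. s *\<^sub>R h)) (at t within S)"
    by (auto intro!: derivative_eq_intros)
  have d2: "(g has_derivative (\<lambda>h'. inner (G (x + t *\<^sub>R h)) h')) (at (x + t *\<^sub>R h) within (\<lambda>t. x + t *\<^sub>R h) ` S)"
    using g_grad has_derivative_at_withinI by blast
  have "((\<lambda>t. g (x + t *\<^sub>R h)) has_derivative (\<lambda>s. inner (G (x + t *\<^sub>R h)) (s *\<^sub>R h))) (at t within S)"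
    using has_derivative_in_compose[OF d1 d2] by (simp add: o_def)
  then show ?thesis by simp
qed

lemma first_order_convex:
  fixes g :: "'a::euclidean_space \<Rightarrow> real"
  assumes g_convex: "convex_on UNIV g"
    and g_grad: "\<And>x. (g has_derivative (\<lambda>h. inner (G x) h)) (at x)"
  shows "g y \<ge> g x + inner (G x) (y - x)"
proof -
  let ?p = "\<lambda>t. g (x + t *\<^sub>R (y - x))"
  have cv: "convex_on UNIV ?p"
  proof (rule convex_onI)
    fix u s t :: real assume "0 < u" "u < 1"
    have "x + ((1 - u) *\<^sub>R s + u *\<^sub>R t) *\<^sub>R (y - x) = (1 - u) *\<^sub>R (x + s *\<^sub>R (y - x)) + u *\<^sub>R (x + t *\<^sub>R (y - x))"
      by (simp add: algebra_simps)
    then show "?p ((1 - u) *\<^sub>R s + u *\<^sub>R t) \<le> (1 - u) * ?p s + u * ?p t"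
      using convex_onD[OF g_convex, of u "x + s *\<^sub>R (y - x)" "x + t *\<^sub>R (y - x)"] \<open>0 < u\<close> \<open>u < 1\<close>
      by simp
  qed simp
  have "?p 1 - ?p 0 \<ge> inner (G (x + 0 *\<^sub>R (y - x))) (y - x) * (1 - 0)"
  proof (rule convex_on_imp_above_tangent[OF cv])
    have "(?p has_derivative (\<lambda>s. s * inner (G (x + 0 *\<^sub>R (y - x))) (y - x))) (at 0 within UNIV)"
      by (rule line_deriv[OF g_grad])
    moreover have "(\<lambda>s. s * inner (G (x + 0 *\<^sub>R (y - x))) (y - x)) = (*) (inner (G (x + 0 *\<^sub>R (y - x))) (y - x))"
      by (auto simp: fun_eq_iff)
    ultimately show "(?p has_field_derivative inner (G (x + 0 *\<^sub>R (y - x))) (y - x)) (at 0 within UNIV)"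
      unfolding has_field_derivative_def by simp
  qed auto
  then show ?thesis by simp
qed

lemma descent:
  fixes g :: "'a::euclidean_space \<Rightarrow> real"
  assumes g_grad: "\<And>x. (g has_derivative (\<lambda>h. inner (G x) h)) (at x)"
    and L: "\<forall>x y. norm (G x - G y) \<le> L * norm (x - y)" and L0: "L \<ge> 0"
  shows "g y \<le> g x + inner (G x) (y - x) + L * (norm (y - x))\<^sup>2"
proof (cases "y = x")
  case True then show ?thesis by simp
next
  case False
  let ?p = "\<lambda>t. g (x + t *\<^sub>R (y - x))"
  obtain t where t: "t \<in> {0<..<1}" and eq: "?p 1 - ?p 0 = (\<lambda>s. s * inner (G (x + t *\<^sub>R (y - x))) (y - x)) (1 - 0)"
    using mvt_simple[of 0 1 ?p "\<lambda>t s. s * inner (G (x + t *\<^sub>R (y - x))) (y - x)"]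
      line_deriv[OF g_grad] by auto
  have "inner (G (x + t *\<^sub>R (y - x))) (y - x) - inner (G x) (y - x)
        = inner (G (x + t *\<^sub>R (y - x)) - G x) (y - x)" by (simp add: inner_diff_left)
  also have "\<dots> \<le> norm (G (x + t *\<^sub>R (y - x)) - G x) * norm (y - x)" by (rule norm_cauchy_schwarz)
  also have "\<dots> \<le> L * norm (t *\<^sub>R (y - x)) * norm (y - x)"
  proof (rule mult_right_mono)
    have "norm (G (x + t *\<^sub>R (y - x)) - G x) \<le> L * norm ((x + t *\<^sub>R (y - x)) - x)"
      using L by blast
    then show "norm (G (x + t *\<^sub>R (y - x)) - G x) \<le> L * norm (t *\<^sub>R (y - x))" by simp
  qed simp
  also have "\<dots> \<le> L * (norm (y - x))\<^sup>2"
  proof -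
    have "L * (t * norm (y - x)) * norm (y - x) = t * (L * (norm (y - x) * norm (y - x)))" by (simp add: algebra_simps)
    also have "\<dots> \<le> 1 * (L * (norm (y - x) * norm (y - x)))"
      using t L0 by (intro mult_right_mono) auto
    finally show ?thesis using t by (simp add: power2_eq_square)
  qed
  finally show ?thesis using eq by simp
qed

lemma cocoercive:
  fixes g :: "'a::euclidean_space \<Rightarrow> real"
  assumes g_convex: "convex_on UNIV g"
    and g_grad: "\<And>x. (g has_derivative (\<lambda>h. inner (G x) h)) (at x)"
    and G_lip: "\<exists>L. \<forall>x y. norm (G x - G y) \<le> L * norm (x - y)"
  shows "\<exists>\<beta>>0. \<forall>x y. inner (G x - G y) (x - y) \<ge> \<beta> * (norm (G x - G y))\<^sup>2"
proof -
  obtain L0 where L0: "\<forall>x y. norm (G x - G y) \<le> L0 * norm (x - y)" using G_lip by blast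
  define M where "M = max L0 1"
  have M: "\<forall>x y. norm (G x - G y) \<le> M * norm (x - y)"
    using L0 unfolding M_def by (meson max.cobounded1 mult_right_mono norm_ge_zero order_trans)
  have M0: "M \<ge> 1" unfolding M_def by simp
  have key: "g x + inner (G x) (y - x) + (norm (G y - G x))\<^sup>2 / (4 * M) \<le> g y" for x y
  proof -
    define t where "t = 1 / (2 * M)"
    define w where "w = y - t *\<^sub>R (G y - G x)"
    have d: "g w \<le> g y + inner (G y) (w - y) + M * (norm (w - y))\<^sup>2"
      by (rule descent[OF g_grad M]) (use M0 in simp)
    have f: "g w \<ge> g x + inner (G x) (w - x)"
      by (rule first_order_convex[OF g_convex g_grad])
    have e1: "inner (G y) (w - y) = - (t * inner (G y) (G y - G x))" unfolding w_def by simp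
    have e2: "inner (G x) (w - x) = inner (G x) (y - x) - t * inner (G x) (G y - G x)"
      unfolding w_def by (simp add: inner_diff_right)
    have e3: "(norm (w - y))\<^sup>2 = t\<^sup>2 * (norm (G y - G x))\<^sup>2" unfolding w_def
      by (simp add: power_mult_distrib)
    have e4: "(norm (G y - G x))\<^sup>2 = inner (G y) (G y - G x) - inner (G x) (G y - G x)"
      by (simp add: power2_norm_eq_inner inner_diff_left)
    have s1: "g x + inner (G x) (y - x) - t * inner (G x) (G y - G x) \<le> g y - t * inner (G y) (G y - G x) + M * (t\<^sup>2 * (norm (G y - G x))\<^sup>2)"
    proof -
      have "M * (norm (w - y))\<^sup>2 = M * (t\<^sup>2 * (norm (G y - G x))\<^sup>2)" using e3 by simp
      then show ?thesis using d f e1 e2 by linarith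
    qed
    have s2: "t * (norm (G y - G x))\<^sup>2 = t * inner (G y) (G y - G x) - t * inner (G x) (G y - G x)"
      using e4 by (simp add: right_diff_distrib)
    have "g x + inner (G x) (y - x) + (t - M * t\<^sup>2) * (norm (G y - G x))\<^sup>2 \<le> g y"
      using s1 s2 by (simp add: algebra_simps)
    moreover have "t - M * t\<^sup>2 = 1 / (4 * M)" unfolding t_def using M0
      by (simp add: field_simps power2_eq_square)
    ultimately show ?thesis by simp
  qed
  show ?thesis
  proof (intro exI[of _ "1 / (2 * M)"] conjI allI)
    show "0 < 1 / (2 * M)" using M0 by simp
    fix x y
    have a: "g x + inner (G x) (y - x) + (norm (G y - G x))\<^sup>2 / (4 * M) \<le> g y" by (rule key)
    have b: "g y + inner (G y) (x - y) + (norm (G x - G y))\<^sup>2 / (4 * M) \<le> g x" by (rule key)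
    have n: "norm (G y - G x) = norm (G x - G y)" by (rule norm_minus_commute)
    have i: "inner (G x - G y) (x - y) = - inner (G x) (y - x) - inner (G y) (x - y)"
      by (simp add: algebra_simps inner_diff_left inner_diff_right inner_commute)
    have "(norm (G x - G y))\<^sup>2 / (2 * M) = (norm (G x - G y))\<^sup>2 / (4 * M) + (norm (G x - G y))\<^sup>2 / (4 * M)"
      by (simp add: field_simps)
    then show "1 / (2 * M) * (norm (G x - G y))\<^sup>2 \<le> inner (G x - G y) (x - y)"
      using a b n i by simp
  qed
qed

lemma norm_add_sq: "(norm (a + b))\<^sup>2 = (norm a)\<^sup>2 + 2 * inner a b + (norm (b::'a::real_inner))\<^sup>2"
  by (simp add: power2_norm_eq_inner inner_add_left inner_add_right inner_commute)

lemma ereal_shift1: "A + ereal r \<le> ereal b \<Longrightarrow> A \<le> ereal (b - r)"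
  by (cases A) auto
lemma ereal_shift2: "A \<le> ereal (b - r) \<Longrightarrow> A + ereal r \<le> ereal b"
  by (cases A) auto
lemma ereal_shift3: "A + ereal a \<le> B + ereal b \<Longrightarrow> A + ereal (a - b) \<le> B"
  by (cases A; cases B) auto

lemma neg_by_eps:
  fixes D K :: real
  assumes K: "K > 0" and H: "\<And>e. e > 0 \<Longrightarrow> D \<ge> - e * K"
  shows "D \<ge> 0"
proof (rule ccontr)
  assume "\<not> D \<ge> 0"
  then have "D < 0" by simp
  have e: "- D / (2 * K) > 0" using \<open>D < 0\<close> K by (intro divide_pos_pos) auto
  have "D \<ge> - (- D / (2 * K)) * K" using H[OF e] by simp
  then show False using \<open>D < 0\<close> K by (simp add: field_simps)
qed

lemma frechet_ineq:
  fixes \<phi> :: "'a::real_inner \<Rightarrow> ereal"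
  assumes cvx: "ereal_convex (\<lambda>x. \<phi> x - ereal (\<sigma> / 2 * (norm x)\<^sup>2))"
    and nm: "\<forall>x. \<phi> x \<noteq> -\<infinity>" and \<sigma>: "\<sigma> \<ge> 0" and v: "v \<in> frechet_subdiff \<phi> x"
  shows "\<phi> y \<ge> \<phi> x + ereal (inner v (y - x) + \<sigma> / 2 * (norm (y - x))\<^sup>2)"
proof -
  from v have fx: "\<bar>\<phi> x\<bar> \<noteq> \<infinity>" and fr: "\<forall>e>0. \<exists>d>0. \<forall>w. norm (w - x) < d \<longrightarrow>
        \<phi> w \<ge> \<phi> x + ereal (inner v (w - x) - e * norm (w - x))"
    unfolding frechet_subdiff_def by auto
  obtain a where a: "\<phi> x = ereal a" using fx by (cases "\<phi> x") auto
  show ?thesis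
  proof (cases "\<phi> y = \<infinity>")
    case True then show ?thesis by simp
  next
    case False
    then obtain b where b: "\<phi> y = ereal b" using nm by (cases "\<phi> y") auto
    define h where "h = y - x"
    define q where "q = (\<lambda>w::'a. \<sigma> / 2 * (norm w)\<^sup>2)"
    have C: "\<exists>c. \<phi> (x + t *\<^sub>R h) = ereal c \<and> c \<le> (1 - t) * a + t * b - \<sigma> / 2 * (t * (1 - t)) * (norm h)\<^sup>2"
      if t: "0 < t" "t < 1" for t
    proof -
      have "\<phi> ((1 - t) *\<^sub>R x + t *\<^sub>R y) - ereal (q ((1 - t) *\<^sub>R x + t *\<^sub>R y))
            \<le> ereal (1 - t) * (\<phi> x - ereal (q x)) + ereal t * (\<phi> y - ereal (q y))"
        using cvx t unfolding ereal_convex_def q_def by blast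
      moreover have xt: "(1 - t) *\<^sub>R x + t *\<^sub>R y = x + t *\<^sub>R h" unfolding h_def by (simp add: algebra_simps)
      ultimately have le: "\<phi> (x + t *\<^sub>R h) - ereal (q (x + t *\<^sub>R h)) \<le> ereal ((1 - t) * (a - q x) + t * (b - q y))"
        using a b by simp
      then obtain c where c: "\<phi> (x + t *\<^sub>R h) = ereal c" using nm by (cases "\<phi> (x + t *\<^sub>R h)") auto
      with le have c1: "c - q (x + t *\<^sub>R h) \<le> (1 - t) * (a - q x) + t * (b - q y)" by simp
      have qid: "(1 - t) * q x + t * q y - q (x + t *\<^sub>R h) = \<sigma> / 2 * (t * (1 - t)) * (norm h)\<^sup>2"
      proof -
        have y: "y = x + h" unfolding h_def by simp
        have e1: "(norm (x + t *\<^sub>R h))\<^sup>2 = (norm x)\<^sup>2 + 2 * t * inner x h + t\<^sup>2 * (norm h)\<^sup>2"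
          by (simp add: norm_add_sq power_mult_distrib)
        have e2: "(norm y)\<^sup>2 = (norm x)\<^sup>2 + 2 * inner x h + (norm h)\<^sup>2"
          using y by (simp add: norm_add_sq)
        have "(1 - t) * q x + t * q y - q (x + t *\<^sub>R h) = \<sigma> / 2 * ((1 - t) * (norm x)\<^sup>2 + t * (norm y)\<^sup>2 - (norm (x + t *\<^sub>R h))\<^sup>2)"
          unfolding q_def by (simp add: field_simps)
        also have "\<dots> = \<sigma> / 2 * (t * (1 - t) * (norm h)\<^sup>2)"
          by (rule arg_cong[where f="\<lambda>u. \<sigma> / 2 * u"]) (unfold e1 e2, simp add: algebra_simps power2_eq_square)
        finally show ?thesis by simp
      qed
      have "c \<le> q (x + t *\<^sub>R h) + ((1 - t) * (a - q x) + t * (b - q y))" using c1 by linarith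
      also have "\<dots> = (1 - t) * a + t * b - ((1 - t) * q x + t * q y - q (x + t *\<^sub>R h))"
        by (simp add: algebra_simps)
      also have "\<dots> = (1 - t) * a + t * b - \<sigma> / 2 * (t * (1 - t)) * (norm h)\<^sup>2" using qid by simp
      finally show ?thesis using c by blast
    qed
    define D where "D = b - a - inner v h - \<sigma> / 2 * (norm h)\<^sup>2"
    define K where "K = norm h + \<sigma> / 2 * (norm h)\<^sup>2 + 1"
    have K: "K > 0" unfolding K_def using \<sigma> by (simp add: add_nonneg_pos)
    have "D \<ge> 0"
    proof (rule neg_by_eps[OF K])
      fix e :: real assume e: "e > 0"
      obtain d where d: "d > 0" and dd: "\<forall>w. norm (w - x) < d \<longrightarrow>
        \<phi> w \<ge> \<phi> x + ereal (inner v (w - x) - e * norm (w - x))" using fr e by blast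
      define t where "t = min (1/2) (min e (d / (2 * (norm h + 1))))"
      have t0: "t > 0" unfolding t_def using e d by (simp add: add_nonneg_pos)
      have t1: "t < 1" "t \<le> e" unfolding t_def by auto
      have "t * norm h \<le> d / (2 * (norm h + 1)) * norm h" unfolding t_def
        by (intro mult_right_mono) auto
      also have "\<dots> < d"
      proof -
        have "d / (2 * (norm h + 1)) * norm h = d * (norm h / (2 * (norm h + 1)))" by simp
        also have "\<dots> < d * 1"
        proof (rule mult_strict_left_mono[OF _ d])
          have "norm h < 2 * (norm h + 1)" by (simp add: add_nonneg_pos)
          then show "norm h / (2 * (norm h + 1)) < 1" by (simp add: add_nonneg_pos)
        qed
        finally show ?thesis by simp
      qed
      finally have td: "norm ((x + t *\<^sub>R h) - x) < d" using t0 by simp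
      obtain c where c: "\<phi> (x + t *\<^sub>R h) = ereal c"
        and cle: "c \<le> (1 - t) * a + t * b - \<sigma> / 2 * (t * (1 - t)) * (norm h)\<^sup>2"
        using C[OF t0 t1(1)] by blast
      have "\<phi> (x + t *\<^sub>R h) \<ge> \<phi> x + ereal (inner v ((x + t *\<^sub>R h) - x) - e * norm ((x + t *\<^sub>R h) - x))"
        using dd td by blast
      then have "c \<ge> a + t * inner v h - e * (t * norm h)" using c a t0 by simp
      with cle have "t * (inner v h - e * norm h) \<le> t * (b - a - \<sigma> / 2 * (1 - t) * (norm h)\<^sup>2)"
        by (simp add: algebra_simps)
      then have i1: "inner v h - e * norm h \<le> b - a - \<sigma> / 2 * (1 - t) * (norm h)\<^sup>2"
        using t0 by (simp add: mult_le_cancel_left_pos)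
      have "\<sigma> / 2 * t * (norm h)\<^sup>2 \<le> \<sigma> / 2 * e * (norm h)\<^sup>2"
        using t1 \<sigma> by (intro mult_right_mono mult_left_mono) auto
      moreover have eq1: "\<sigma> / 2 * (1 - t) * (norm h)\<^sup>2 = \<sigma> / 2 * (norm h)\<^sup>2 - \<sigma> / 2 * t * (norm h)\<^sup>2"
        by (simp add: field_simps)
      moreover have eq2: "e * (\<sigma> / 2 * (norm h)\<^sup>2) = \<sigma> / 2 * e * (norm h)\<^sup>2" by simp
      ultimately have "D \<ge> - e * (norm h) - e * (\<sigma> / 2 * (norm h)\<^sup>2)" using i1 unfolding D_def
        by linarith
      moreover have "- e * (norm h) - e * (\<sigma> / 2 * (norm h)\<^sup>2) \<ge> - e * K"
        unfolding K_def using e by (simp add: algebra_simps)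
      ultimately show "D \<ge> - e * K" by linarith
    qed
    then show ?thesis using a b unfolding D_def h_def by simp
  qed
qed

lemma limiting_ineq:
  fixes \<phi> :: "'a::real_inner \<Rightarrow> ereal"
  assumes cvx: "ereal_convex (\<lambda>x. \<phi> x - ereal (\<sigma> / 2 * (norm x)\<^sup>2))"
    and nm: "\<forall>x. \<phi> x \<noteq> -\<infinity>" and \<sigma>: "\<sigma> \<ge> 0" and v: "v \<in> limiting_subdiff \<phi> x"
  shows "\<phi> x \<noteq> \<infinity> \<and> (\<forall>y. \<phi> y \<ge> \<phi> x + ereal (inner v (y - x) + \<sigma> / 2 * (norm (y - x))\<^sup>2))"
proof -
  obtain xs vs where xs: "xs \<longlonglongrightarrow> x" and fxs: "(\<lambda>k. \<phi> (xs k)) \<longlonglongrightarrow> \<phi> x"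
    and vs: "\<forall>k. vs k \<in> frechet_subdiff \<phi> (xs k)" and vsl: "vs \<longlonglongrightarrow> v"
    using v unfolding limiting_subdiff_def by blast
  define r where "r = (\<lambda>k y. inner (vs k) (y - xs k) + \<sigma> / 2 * (norm (y - xs k))\<^sup>2)"
  have ik: "\<phi> y \<ge> \<phi> (xs k) + ereal (r k y)" for k y
    unfolding r_def by (rule frechet_ineq[OF cvx nm \<sigma>]) (use vs in blast)
  have rl: "(\<lambda>k. r k y) \<longlonglongrightarrow> inner v (y - x) + \<sigma> / 2 * (norm (y - x))\<^sup>2" for y
    unfolding r_def by (intro tendsto_intros xs vsl)
  have bnd: "\<phi> x \<le> ereal (b - (inner v (y - x) + \<sigma> / 2 * (norm (y - x))\<^sup>2))" if b: "\<phi> y = ereal b" for y b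
  proof (rule LIMSEQ_le[OF fxs])
    show "(\<lambda>k. ereal (b - r k y)) \<longlonglongrightarrow> ereal (b - (inner v (y - x) + \<sigma> / 2 * (norm (y - x))\<^sup>2))"
      by (intro tendsto_intros rl)
    show "\<exists>N. \<forall>n\<ge>N. \<phi> (xs n) \<le> ereal (b - r n y)"
      using ik[of _ y] b by (auto intro: ereal_shift1)
  qed
  have f0: "\<bar>\<phi> (xs 0)\<bar> \<noteq> \<infinity>" using vs[rule_format, of 0] unfolding frechet_subdiff_def by simp
  then obtain b0 where "\<phi> (xs 0) = ereal b0" by (cases "\<phi> (xs 0)") auto
  from bnd[OF this] have fin: "\<phi> x \<noteq> \<infinity>" by auto
  show ?thesis
  proof (intro conjI allI fin)
    fix y
    show "\<phi> y \<ge> \<phi> x + ereal (inner v (y - x) + \<sigma> / 2 * (norm (y - x))\<^sup>2)"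
    proof (cases "\<phi> y")
      case (real b)
      then show ?thesis using ereal_shift2[OF bnd[OF real]] by simp
    qed (use nm in auto)
  qed
qed

lemma frechet_limiting: "v \<in> frechet_subdiff f x \<Longrightarrow> v \<in> limiting_subdiff f x"
  unfolding limiting_subdiff_def by (intro CollectI exI[of _ "\<lambda>_. x"] exI[of _ "\<lambda>_. v"]) auto

lemma prox_frechet:
  fixes f :: "'a::real_inner \<Rightarrow> ereal"
  assumes lam: "lam > 0" and nm: "f x \<noteq> -\<infinity>" and v: "v \<in> prox_subdiff lam f x"
  shows "v \<in> frechet_subdiff f x"
proof -
  from v have fx: "f x < \<infinity>" and ps: "\<forall>y. f y \<ge> f x + ereal (inner v (y - x) - (norm (y - x))\<^sup>2 / (2 * lam))"
    unfolding prox_subdiff_def by auto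
  show ?thesis unfolding frechet_subdiff_def
  proof (intro CollectI conjI allI impI)
    show "\<bar>f x\<bar> \<noteq> \<infinity>" using fx nm by auto
    fix e :: real assume e: "e > 0"
    show "\<exists>d>0. \<forall>y. norm (y - x) < d \<longrightarrow> f x + ereal (inner v (y - x) - e * norm (y - x)) \<le> f y"
    proof (intro exI[of _ "2 * lam * e"] conjI allI impI)
      show "0 < 2 * lam * e" using lam e by simp
      fix y assume y: "norm (y - x) < 2 * lam * e"
      have "(norm (y - x))\<^sup>2 / (2 * lam) \<le> e * norm (y - x)"
      proof -
        have "(norm (y - x))\<^sup>2 = norm (y - x) * norm (y - x)" by (simp add: power2_eq_square)
        also have "\<dots> \<le> (2 * lam * e) * norm (y - x)" using y by (intro mult_right_mono) auto
        finally show ?thesis using lam by (simp add: field_simps)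
      qed
      then have "f x + ereal (inner v (y - x) - e * norm (y - x)) \<le> f x + ereal (inner v (y - x) - (norm (y - x))\<^sup>2 / (2 * lam))"
        by (intro add_left_mono) simp
      also have "\<dots> \<le> f y" using ps by blast
      finally show "f x + ereal (inner v (y - x) - e * norm (y - x)) \<le> f y" .
    qed
  qed
qed

lemma prox_point_subdiff:
  fixes f :: "'a::real_inner \<Rightarrow> ereal"
  assumes lam: "lam > 0" and pr: "proper_fun f" and y: "y \<in> prox_map lam f z"
  shows "(1 / lam) *\<^sub>R (z - y) \<in> prox_subdiff lam f y"
proof -
  have m: "\<forall>w. f y + ereal ((norm (y - z))\<^sup>2 / (2 * lam)) \<le> f w + ereal ((norm (w - z))\<^sup>2 / (2 * lam))"
    using y unfolding prox_map_def by blast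
  obtain w0 where w0: "f w0 < \<infinity>" using pr unfolding proper_fun_def by blast
  have "f y + ereal ((norm (y - z))\<^sup>2 / (2 * lam)) < \<infinity>"
    using m[rule_format, of w0] w0 by (cases "f w0") auto
  then have fy: "f y < \<infinity>" by auto
  show ?thesis unfolding prox_subdiff_def
  proof (intro CollectI conjI allI fy)
    fix w
    have id: "(norm (w - z))\<^sup>2 = (norm (w - y))\<^sup>2 + 2 * inner (w - y) (y - z) + (norm (y - z))\<^sup>2"
      using norm_add_sq[of "w - y" "y - z"] by simp
    have "inner ((1 / lam) *\<^sub>R (z - y)) (w - y) - (norm (w - y))\<^sup>2 / (2 * lam)
        = (norm (y - z))\<^sup>2 / (2 * lam) - (norm (w - z))\<^sup>2 / (2 * lam)"
    proof -
      have "inner (z - y) (w - y) = - inner (w - y) (y - z)"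
        by (metis inner_commute inner_minus_right minus_diff_eq)
      moreover have "inner ((1 / lam) *\<^sub>R (z - y)) (w - y) = (1 / lam) * inner (z - y) (w - y)" by simp
      ultimately show ?thesis using id lam by (simp add: field_simps)
    qed
    then show "f y + ereal (inner ((1 / lam) *\<^sub>R (z - y)) (w - y) - (norm (w - y))\<^sup>2 / (2 * lam)) \<le> f w"
      using ereal_shift3[OF m[rule_format, of w]] by simp
  qed
qed

lemma lsc_add_cont:
  fixes f :: "'a::metric_space \<Rightarrow> ereal"
  assumes lsc: "lsc_fun f" and nm: "\<forall>x. f x \<noteq> -\<infinity>" and q: "continuous_on UNIV q"
  shows "lsc_fun (\<lambda>x. f x + ereal (q x))"
  unfolding lsc_fun_def
proof (intro allI impI)
  fix x c assume c: "c < f x + ereal (q x)"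
  show "\<forall>\<^sub>F y in nhds x. c < f y + ereal (q y)"
  proof (cases c)
    case MInf
    then show ?thesis using nm by (auto intro!: always_eventually)
  next
    case PInf then show ?thesis using c by simp
  next
    case (real r)
    have "ereal (r - q x) < f x" using c real by (cases "f x") auto
    then obtain a where a1: "ereal (r - q x) < ereal a" and a2: "ereal a < f x" using ereal_dense2 by blast
    have ev1: "\<forall>\<^sub>F y in nhds x. ereal a < f y" using lsc a2 unfolding lsc_fun_def by blast
    have "(q \<longlongrightarrow> q x) (at x)" using q unfolding continuous_on_def by simp
    then have "(q \<longlongrightarrow> q x) (nhds x)" by (simp add: tendsto_nhds_iff)
    then have ev2: "\<forall>\<^sub>F y in nhds x. r - a < q y" using a1 by (intro order_tendstoD(1)) auto
    show ?thesis using ev1 ev2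
    proof (rule eventually_elim2)
      fix y assume "ereal a < f y" "r - a < q y"
      then show "c < f y + ereal (q y)" using real by (cases "f y") auto
    qed
  qed
qed

lemma prox_level_bound:
  fixes f :: "'a::real_inner \<Rightarrow> ereal"
  assumes H: "\<forall>y. f y \<ge> ereal (fb + inner vb (y - xb) - (norm (y - xb))\<^sup>2 / (2 * mu))"
    and mu: "mu > 0" and lam: "lam > 0" "2 * lam \<le> mu"
    and le: "f y + ereal ((norm (y - z))\<^sup>2 / (2 * lam)) \<le> ereal (fb + (norm (xb - z))\<^sup>2 / (2 * lam))"
  shows "norm (y - xb) \<le> 4 * norm (z - (xb + lam *\<^sub>R vb))"
    and "f y \<le> ereal (fb + 4 * norm (z - (xb + lam *\<^sub>R vb)) * (norm vb + norm (z - (xb + lam *\<^sub>R vb)) / lam))"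
proof -
  define h where "h = y - xb"
  define d where "d = z - (xb + lam *\<^sub>R vb)"
  define p where "p = lam *\<^sub>R vb + d"
  have yz: "y - z = h - p" unfolding h_def p_def d_def by (simp add: algebra_simps)
  have xz: "xb - z = - p" unfolding p_def d_def by (simp add: algebra_simps)
  have Hy: "f y \<ge> ereal (fb + inner vb h - (norm h)\<^sup>2 / (2 * mu))" using H h_def by blast
  obtain c where c: "f y = ereal c" using le Hy by (cases "f y") auto
  have n1: "(norm (h - p))\<^sup>2 = (norm h)\<^sup>2 - 2 * inner h p + (norm p)\<^sup>2"
    using norm_add_sq[of h "- p"] by simp
  have i1: "c + ((norm h)\<^sup>2 - 2 * inner h p + (norm p)\<^sup>2) / (2 * lam) \<le> fb + (norm p)\<^sup>2 / (2 * lam)"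
    using le c yz xz n1 by simp
  have i1': "c \<le> fb + (2 * inner h p - (norm h)\<^sup>2) / (2 * lam)"
  proof -
    have "((norm h)\<^sup>2 - 2 * inner h p + (norm p)\<^sup>2) / (2 * lam) = (norm p)\<^sup>2 / (2 * lam) - (2 * inner h p - (norm h)\<^sup>2) / (2 * lam)"
      using lam by (simp add: field_simps)
    then show ?thesis using i1 by linarith
  qed
  have i2: "c \<ge> fb + inner vb h - (norm h)\<^sup>2 / (2 * mu)" using Hy c by simp
  have ip: "inner h p = lam * inner vb h + inner h d" unfolding p_def by (simp add: inner_add_right inner_commute)
  have "(2 * inner h p - (norm h)\<^sup>2) / (2 * lam) = inner vb h + inner h d / lam - (norm h)\<^sup>2 / (2 * lam)"
    using lam unfolding ip by (simp add: field_simps)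
  with i1' i2 have i3: "(norm h)\<^sup>2 / (2 * lam) - (norm h)\<^sup>2 / (2 * mu) \<le> inner h d / lam" by linarith
  have "(norm h)\<^sup>2 / (2 * mu) \<le> (norm h)\<^sup>2 / (4 * lam)"
    using lam mu by (intro divide_left_mono) auto
  moreover have "(norm h)\<^sup>2 / (2 * lam) = (norm h)\<^sup>2 / (4 * lam) + (norm h)\<^sup>2 / (4 * lam)" by simp
  ultimately have "(norm h)\<^sup>2 / (4 * lam) \<le> inner h d / lam" using i3 by linarith
  also have "\<dots> \<le> norm h * norm d / lam" using lam
    by (intro divide_right_mono) (auto simp: norm_cauchy_schwarz)
  finally have "(norm h)\<^sup>2 \<le> 4 * (norm h * norm d)" using lam by (simp add: field_simps)
  then have hb: "norm h \<le> 4 * norm d"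
    by (cases "norm h = 0") (auto simp: power2_eq_square)
  then show "norm (y - xb) \<le> 4 * norm (z - (xb + lam *\<^sub>R vb))" unfolding h_def d_def .
  have "c \<le> fb + inner h p / lam"
  proof -
    have "(2 * inner h p - (norm h)\<^sup>2) / (2 * lam) \<le> inner h p / lam" using lam by (simp add: field_simps)
    then show ?thesis using i1' by linarith
  qed
  also have "inner h p \<le> norm h * (lam * norm vb + norm d)"
  proof -
    have "inner h p \<le> norm h * norm p" by (rule norm_cauchy_schwarz)
    also have "norm p \<le> lam * norm vb + norm d" unfolding p_def using lam
      by (metis abs_of_pos norm_scaleR norm_triangle_ineq)
    then have "norm h * norm p \<le> norm h * (lam * norm vb + norm d)" by (intro mult_left_mono) auto
    finally show ?thesis .
  qed
  then have "fb + inner h p / lam \<le> fb + norm h * (lam * norm vb + norm d) / lam"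
    using lam by (simp add: divide_right_mono)
  also have "\<dots> = fb + norm h * (norm vb + norm d / lam)" using lam by (simp add: field_simps)
  also have "\<dots> \<le> fb + 4 * norm d * (norm vb + norm d / lam)"
    using hb lam by (intro add_left_mono mult_right_mono) auto
  finally show "f y \<le> ereal (fb + 4 * norm (z - (xb + lam *\<^sub>R vb)) * (norm vb + norm (z - (xb + lam *\<^sub>R vb)) / lam))"
    using c unfolding d_def by simp
qed

lemma prox_exists:
  fixes f :: "'a::euclidean_space \<Rightarrow> ereal"
  assumes lsc: "lsc_fun f" and nm: "\<forall>x. f x \<noteq> -\<infinity>" and fxb: "f xb = ereal fb"
    and H: "\<forall>y. f y \<ge> ereal (fb + inner vb (y - xb) - (norm (y - xb))\<^sup>2 / (2 * mu))"
    and mu: "mu > 0" and lam: "lam > 0" "2 * lam \<le> mu"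
  shows "prox_map lam f z \<noteq> {}"
proof -
  define F where "F = (\<lambda>w. f w + ereal ((norm (w - z))\<^sup>2 / (2 * lam)))"
  define K where "K = cball xb (4 * norm (z - (xb + lam *\<^sub>R vb)))"
  have Fxb: "F xb = ereal (fb + (norm (xb - z))\<^sup>2 / (2 * lam))" unfolding F_def fxb by simp
  have inK: "w \<in> K" if "F w \<le> F xb" for w
  proof -
    have "norm (w - xb) \<le> 4 * norm (z - (xb + lam *\<^sub>R vb))"
      by (rule prox_level_bound(1)[OF H mu lam]) (use that Fxb F_def in simp)
    then show ?thesis unfolding K_def mem_cball dist_norm by (simp add: norm_minus_commute)
  qed
  have xbK: "xb \<in> K" unfolding K_def by simp
  have lscF: "lsc_fun F" unfolding F_def
  proof (rule lsc_add_cont[OF lsc nm])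
    have "continuous_on UNIV (\<lambda>w. (norm (w - z))\<^sup>2 * (1 / (2 * lam)))" by (intro continuous_intros)
    then show "continuous_on UNIV (\<lambda>w. (norm (w - z))\<^sup>2 / (2 * lam))" by simp
  qed
  have cl: "closed {w. F w \<le> c}" for c
  proof -
    have "open {w. c < F w}"
    proof (rule open_subopen[THEN iffD2], rule ballI)
      fix x assume "x \<in> {w. c < F w}"
      then have "\<forall>\<^sub>F y in nhds x. c < F y" using lscF unfolding lsc_fun_def by blast
      then obtain S where "open S" "x \<in> S" "\<forall>y\<in>S. c < F y" unfolding eventually_nhds by blast
      then show "\<exists>T. open T \<and> x \<in> T \<and> T \<subseteq> {w. c < F w}" by blast
    qed
    moreover have "- {w. F w \<le> c} = {w. c < F w}" by (auto simp: not_le)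
    ultimately show ?thesis unfolding closed_def by simp
  qed
  define m where "m = (INF w\<in>K. F w)"
  have "K \<inter> (\<Inter>c\<in>{c. m < c}. {w. F w \<le> c}) \<noteq> {}"
  proof (rule compact_imp_fip_image)
    show "compact K" unfolding K_def by simp
    show "closed {w. F w \<le> c}" for c by (rule cl)
    fix I' assume I': "finite I'" "I' \<subseteq> {c. m < c}"
    show "K \<inter> (\<Inter>c\<in>I'. {w. F w \<le> c}) \<noteq> {}"
    proof (cases "I' = {}")
      case True then show ?thesis using xbK by auto
    next
      case False
      define c0 where "c0 = Min I'"
      have "c0 \<in> I'" unfolding c0_def using I' False by simp
      then have "m < c0" using I' by auto
      then obtain w where w: "w \<in> K" "F w < c0" unfolding m_def INF_less_iff by blast
      have "F w \<le> c" if "c \<in> I'" for c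
        using w(2) Min_le[OF I'(1) that] unfolding c0_def by simp
      then show ?thesis using w(1) by blast
    qed
  qed
  then obtain w0 where w0K: "w0 \<in> K" and w0c: "\<And>c. m < c \<Longrightarrow> F w0 \<le> c" by blast
  have w0m: "F w0 \<le> m" by (rule dense_ge) (rule w0c)
  have Fm: "F w0 \<le> F w" for w
  proof (cases "w \<in> K")
    case True
    then have "m \<le> F w" unfolding m_def by (rule INF_lower)
    then show ?thesis using w0m by simp
  next
    case False
    then have "\<not> F w \<le> F xb" using inK by blast
    then have "F xb < F w" by simp
    moreover have "m \<le> F xb" unfolding m_def using xbK by (rule INF_lower)
    ultimately show ?thesis using w0m by simp
  qed
  have "w0 \<in> prox_map lam f z" unfolding prox_map_def
  proof (intro CollectI allI)
    fix w show "f w0 + ereal ((norm (w0 - z))\<^sup>2 / (2 * lam)) \<le> f w + ereal ((norm (w - z))\<^sup>2 / (2 * lam))"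
      using Fm[of w] unfolding F_def .
  qed
  then show ?thesis by blast
qed

lemma prox_at_zb:
  fixes f :: "'a::real_inner \<Rightarrow> ereal"
  assumes fxb: "f xb = ereal fb"
    and H: "\<forall>y. f y \<ge> ereal (fb + inner vb (y - xb) - (norm (y - xb))\<^sup>2 / (2 * mu))"
    and mu: "mu > 0" and lam: "lam > 0" "2 * lam \<le> mu"
  shows "prox_map lam f (xb + lam *\<^sub>R vb) = {xb}"
proof -
  let ?z = "xb + lam *\<^sub>R vb"
  have Fxb: "f xb + ereal ((norm (xb - ?z))\<^sup>2 / (2 * lam)) = ereal (fb + lam * (norm vb)\<^sup>2 / 2)"
    using fxb lam by (simp add: power2_eq_square)
  have mem: "xb \<in> prox_map lam f ?z"
    unfolding prox_map_def
  proof (intro CollectI allI)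
    fix w
    show "f xb + ereal ((norm (xb - ?z))\<^sup>2 / (2 * lam)) \<le> f w + ereal ((norm (w - ?z))\<^sup>2 / (2 * lam))"
    proof (cases "f w")
      case (real c)
      define h where "h = w - xb"
      have c: "c \<ge> fb + inner vb h - (norm h)\<^sup>2 / (2 * mu)" using H real h_def by (metis ereal_less_eq(3))
      have n: "(norm (w - ?z))\<^sup>2 = (norm h)\<^sup>2 - 2 * lam * inner vb h + lam\<^sup>2 * (norm vb)\<^sup>2"
        using norm_add_sq[of h "- lam *\<^sub>R vb"] unfolding h_def
        by (simp add: algebra_simps power_mult_distrib inner_commute)
      have "(norm h)\<^sup>2 / (2 * mu) \<le> (norm h)\<^sup>2 / (2 * lam)"
        using lam mu by (intro divide_left_mono) auto
      moreover have "((norm h)\<^sup>2 - 2 * lam * inner vb h + lam\<^sup>2 * (norm vb)\<^sup>2) / (2 * lam)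
          = (norm h)\<^sup>2 / (2 * lam) - inner vb h + lam * (norm vb)\<^sup>2 / 2"
        using lam by (simp add: field_simps power2_eq_square)
      ultimately have "fb + lam * (norm vb)\<^sup>2 / 2 \<le> c + (norm (w - ?z))\<^sup>2 / (2 * lam)"
        using c n by simp
      then show ?thesis using Fxb real by simp
    qed (use H[rule_format, of w] in simp_all)
  qed
  have "y = xb" if y: "y \<in> prox_map lam f ?z" for y
  proof -
    have "f y + ereal ((norm (y - ?z))\<^sup>2 / (2 * lam)) \<le> f xb + ereal ((norm (xb - ?z))\<^sup>2 / (2 * lam))"
      using y unfolding prox_map_def by blast
    then have "norm (y - xb) \<le> 4 * norm (?z - (xb + lam *\<^sub>R vb))"
      by (intro prox_level_bound(1)[OF H mu lam]) (simp add: fxb)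
    then show ?thesis by simp
  qed
  then show ?thesis using mem by blast
qed

definition witness :: "('a::euclidean_space \<Rightarrow> ereal) \<Rightarrow> 'a \<Rightarrow> 'a \<Rightarrow> 'a set \<Rightarrow> 'a set \<Rightarrow> ('a \<Rightarrow> ereal) \<Rightarrow> real \<Rightarrow> real \<Rightarrow> real \<Rightarrow> real \<Rightarrow> bool" where
  "witness f xb vb U V \<phi> \<epsilon> \<rho> \<eta> \<sigma> \<longleftrightarrow> \<rho> > 0 \<and> \<eta> > 0 \<and> ball xb \<rho> \<subseteq> U \<and> ball vb \<eta> \<subseteq> V \<and>
     (\<forall>x. \<phi> x \<noteq> -\<infinity>) \<and> \<sigma> \<ge> 0 \<and> ereal_strongly_convex \<sigma> \<phi> \<and> (\<forall>x\<in>U. \<phi> x \<le> f x) \<and> \<epsilon> > 0 \<and>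
     (\<forall>x v. x \<in> U \<and> f x < f xb + ereal \<epsilon> \<and> v \<in> V \<and> v \<in> limiting_subdiff f x \<longrightarrow>
         v \<in> limiting_subdiff \<phi> x \<and> f x = \<phi> x) \<and>
     f xb \<noteq> \<infinity> \<and> vb \<in> limiting_subdiff \<phi> xb \<and> \<phi> xb = f xb"

lemma lim_eventually_ball:
  assumes "X \<longlonglongrightarrow> (l::'b::metric_space)" "e > 0"
  shows "\<exists>N. \<forall>n\<ge>N. X n \<in> ball l e"
  using assms unfolding lim_sequentially by (auto simp: dist_commute)

lemma vc_unpack:
  fixes f :: "'a::euclidean_space \<Rightarrow> ereal"
  assumes vcw: "var_convex_with Q f xb vb" and QS: "\<And>\<phi>. Q \<phi> \<Longrightarrow> \<exists>\<sigma>\<ge>0. ereal_strongly_convex \<sigma> \<phi>"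
    and nm: "\<forall>x. f x \<noteq> -\<infinity>"
  shows "\<exists>U V \<phi> \<epsilon> \<rho> \<eta> \<sigma>. Q \<phi> \<and> witness f xb vb U V \<phi> \<epsilon> \<rho> \<eta> \<sigma>"
proof -
  from vcw obtain U V \<phi> \<epsilon> where vbl: "vb \<in> limiting_subdiff f xb" and U: "xb \<in> interior U" and V: "vb \<in> interior V"
    and pnm: "\<forall>x. \<phi> x \<noteq> -\<infinity>" and Q: "Q \<phi>" and le: "\<forall>x\<in>U. \<phi> x \<le> f x" and \<epsilon>: "\<epsilon> > 0"
    and eqv: "\<forall>x v. (x \<in> U \<and> f x < f xb + ereal \<epsilon> \<and> v \<in> V \<and> v \<in> limiting_subdiff f x)
              \<longleftrightarrow> (x \<in> U \<and> v \<in> V \<and> v \<in> limiting_subdiff \<phi> x)"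
    and eqf: "\<forall>x v. x \<in> U \<and> v \<in> V \<and> v \<in> limiting_subdiff \<phi> x \<longrightarrow> f x = \<phi> x"
    unfolding var_convex_with_def by blast
  obtain \<sigma> where \<sigma>: "\<sigma> \<ge> 0" "ereal_strongly_convex \<sigma> \<phi>" using QS[OF Q] by blast
  have cvx: "ereal_convex (\<lambda>x. \<phi> x - ereal (\<sigma> / 2 * (norm x)\<^sup>2))" using \<sigma>(2) unfolding ereal_strongly_convex_def .
  obtain \<rho> where \<rho>: "\<rho> > 0" "ball xb \<rho> \<subseteq> U" using U by (meson mem_interior)
  obtain \<eta> where \<eta>: "\<eta> > 0" "ball vb \<eta> \<subseteq> V" using V by (meson mem_interior)
  have imp: "v \<in> limiting_subdiff \<phi> x \<and> f x = \<phi> x"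
    if "x \<in> U" "f x < f xb + ereal \<epsilon>" "v \<in> V" "v \<in> limiting_subdiff f x" for x v
    using eqv eqf that by blast
  have fin: "f xb \<noteq> \<infinity>"
  proof
    assume inf: "f xb = \<infinity>"
    obtain xs vs where xs: "xs \<longlonglongrightarrow> xb" and fxs: "(\<lambda>k. f (xs k)) \<longlonglongrightarrow> f xb"
      and vs: "\<forall>k. vs k \<in> frechet_subdiff f (xs k)" and vsl: "vs \<longlonglongrightarrow> vb"
      using vbl unfolding limiting_subdiff_def by blast
    obtain N1 where N1: "\<forall>n\<ge>N1. xs n \<in> ball xb \<rho>" using lim_eventually_ball[OF xs \<rho>(1)] by blast
    obtain N2 where N2: "\<forall>n\<ge>N2. vs n \<in> ball vb \<eta>" using lim_eventually_ball[OF vsl \<eta>(1)] by blast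
    define K where "K = max N1 N2"
    have good: "vs n \<in> limiting_subdiff \<phi> (xs n) \<and> f (xs n) = \<phi> (xs n) \<and> \<bar>f (xs n)\<bar> \<noteq> \<infinity>" if "n \<ge> K" for n
    proof -
      have fr: "\<bar>f (xs n)\<bar> \<noteq> \<infinity>" using vs[rule_format, of n] unfolding frechet_subdiff_def by simp
      have "f (xs n) < f xb + ereal \<epsilon>" using fr inf by auto
      moreover have "xs n \<in> U" "vs n \<in> V" using N1 N2 that \<rho> \<eta> unfolding K_def by auto
      ultimately show ?thesis using imp vs fr frechet_limiting by blast
    qed
    have gK: "\<bar>f (xs K)\<bar> \<noteq> \<infinity>" using conjunct2[OF conjunct2[OF good[OF order_refl]]] .
    obtain c where c: "f (xs K) = ereal c" using gK by (cases "f (xs K)") auto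
    define B where "B = c + (norm vb + \<eta>) * (2 * \<rho>)"
    have "f (xs n) \<le> ereal B" if n: "n \<ge> K" for n
    proof -
      have gn: "vs n \<in> limiting_subdiff \<phi> (xs n) \<and> f (xs n) = \<phi> (xs n) \<and> \<bar>f (xs n)\<bar> \<noteq> \<infinity>" by (rule good[OF n])
      note g = conjunct1[OF gn] conjunct1[OF conjunct2[OF gn]] conjunct2[OF conjunct2[OF gn]]
      have "\<phi> (xs K) \<ge> \<phi> (xs n) + ereal (inner (vs n) (xs K - xs n) + \<sigma> / 2 * (norm (xs K - xs n))\<^sup>2)"
        using limiting_ineq[OF cvx pnm \<sigma>(1) g(1)] by blast
      then have i: "f (xs K) \<ge> f (xs n) + ereal (inner (vs n) (xs K - xs n) + \<sigma> / 2 * (norm (xs K - xs n))\<^sup>2)"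
        using conjunct1[OF conjunct2[OF good[OF order_refl]]] g by simp
      have "- (norm vb + \<eta>) * (2 * \<rho>) \<le> inner (vs n) (xs K - xs n)"
      proof -
        have "vs n \<in> ball vb \<eta>" using N2 n unfolding K_def by auto
        then have "norm (vs n - vb) < \<eta>" by (simp add: dist_norm norm_minus_commute)
        moreover have "norm (vs n) \<le> norm vb + norm (vs n - vb)" by (rule norm_triangle_sub)
        ultimately have nv: "norm (vs n) \<le> norm vb + \<eta>" by linarith
        have nx: "norm (xs K - xs n) \<le> 2 * \<rho>"
        proof -
          have "dist xb (xs K) < \<rho>" "dist xb (xs n) < \<rho>" using N1 n unfolding K_def by auto
          moreover have "dist (xs K) (xs n) \<le> dist (xs K) xb + dist xb (xs n)" by (rule dist_triangle)
          ultimately have "dist (xs K) (xs n) \<le> 2 * \<rho>" by (simp add: dist_commute)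
          then show ?thesis by (simp add: dist_norm)
        qed
        have "\<bar>inner (vs n) (xs K - xs n)\<bar> \<le> norm (vs n) * norm (xs K - xs n)" by (rule Cauchy_Schwarz_ineq2)
        also have "\<dots> \<le> (norm vb + \<eta>) * (2 * \<rho>)" using nv nx \<eta> by (intro mult_mono) auto
        finally show ?thesis by linarith
      qed
      moreover have "0 \<le> \<sigma> / 2 * (norm (xs K - xs n))\<^sup>2" using \<sigma> by simp
      ultimately have "inner (vs n) (xs K - xs n) + \<sigma> / 2 * (norm (xs K - xs n))\<^sup>2 \<ge> - (norm vb + \<eta>) * (2 * \<rho>)" by linarith
      then have "f (xs n) + ereal (- (norm vb + \<eta>) * (2 * \<rho>)) \<le> f (xs K)"
        using i by (meson add_left_mono ereal_less_eq(3) order_trans)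
      then show ?thesis using c unfolding B_def using g(3) by (cases "f (xs n)") (auto simp: algebra_simps)
    qed
    then have "f xb \<le> ereal B" by (intro LIMSEQ_le_const2[OF fxs]) auto
    then show False using inf by simp
  qed
  have xbU: "xb \<in> U" "vb \<in> V" using \<rho> \<eta> by auto
  have "f xb < f xb + ereal \<epsilon>" using fin nm \<epsilon> by (cases "f xb") auto
  then have w: "vb \<in> limiting_subdiff \<phi> xb \<and> f xb = \<phi> xb" using imp xbU vbl by blast
  have imp': "\<forall>x v. x \<in> U \<and> f x < f xb + ereal \<epsilon> \<and> v \<in> V \<and> v \<in> limiting_subdiff f x \<longrightarrow>
         v \<in> limiting_subdiff \<phi> x \<and> f x = \<phi> x" using imp by blast
  have "witness f xb vb U V \<phi> \<epsilon> \<rho> \<eta> \<sigma>"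
  proof -
    have w1: "vb \<in> limiting_subdiff \<phi> xb" "\<phi> xb = f xb" using w by auto
    show ?thesis unfolding witness_def using \<rho> \<eta> pnm \<sigma> le \<epsilon> fin w1 imp' by blast
  qed
  then show ?thesis using Q by blast
qed

lemma witnessD:
  assumes "witness f xb vb U V \<phi> \<epsilon> \<rho> \<eta> \<sigma>"
  shows "\<rho> > 0" "\<eta> > 0" "ball xb \<rho> \<subseteq> U" "ball vb \<eta> \<subseteq> V" "\<forall>x. \<phi> x \<noteq> -\<infinity>" "\<sigma> \<ge> 0"
    "ereal_convex (\<lambda>x. \<phi> x - ereal (\<sigma> / 2 * (norm x)\<^sup>2))" "\<forall>x\<in>U. \<phi> x \<le> f x" "\<epsilon> > 0"
    "\<And>x v. x \<in> U \<Longrightarrow> f x < f xb + ereal \<epsilon> \<Longrightarrow> v \<in> V \<Longrightarrow> v \<in> limiting_subdiff f x \<Longrightarrow>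
         v \<in> limiting_subdiff \<phi> x \<and> f x = \<phi> x"
    "f xb \<noteq> \<infinity>" "vb \<in> limiting_subdiff \<phi> xb" "\<phi> xb = f xb"
  using assms unfolding witness_def ereal_strongly_convex_def by auto

lemma global_H:
  fixes f :: "'a::euclidean_space \<Rightarrow> ereal"
  assumes W: "witness f xb vb U V \<phi> \<epsilon> \<rho> \<eta> \<sigma>" and fxb: "f xb = ereal fb"
    and pb: "\<forall>y. ereal m \<le> f y + ereal ((norm (y - x0))\<^sup>2 / (2 * lam0))" and lam0: "lam0 > 0"
  shows "\<exists>mu>0. \<forall>y. f y \<ge> ereal (fb + inner vb (y - xb) - (norm (y - xb))\<^sup>2 / (2 * mu))"
proof -
  note w = witnessD[OF W]
  have phi: "\<phi> y \<ge> ereal (fb + inner vb (y - xb))" for y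
  proof -
    have "\<phi> y \<ge> \<phi> xb + ereal (inner vb (y - xb) + \<sigma> / 2 * (norm (y - xb))\<^sup>2)"
      using limiting_ineq[OF w(7) w(5) w(6) w(12)] by blast
    moreover have "ereal (fb + inner vb (y - xb)) \<le> \<phi> xb + ereal (inner vb (y - xb) + \<sigma> / 2 * (norm (y - xb))\<^sup>2)"
      using w(13) fxb w(6) by simp
    ultimately show ?thesis by simp
  qed
  define A where "A = norm (xb - x0)"
  define Kc where "Kc = \<bar>fb - m\<bar> + A\<^sup>2 / lam0"
  define S where "S = 1 / lam0 + (norm vb + 1) / \<rho> + Kc / \<rho>\<^sup>2"
  have S: "S > 0" unfolding S_def Kc_def using lam0 w(1) by (simp add: add_pos_nonneg)
  define mu where "mu = min (\<epsilon> / ((norm vb)\<^sup>2 + 1)) (1 / (2 * S))"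
  have mu: "mu > 0" unfolding mu_def using w(9) S by (simp add: add_nonneg_pos)
  have muS: "1 / (2 * mu) \<ge> S"
  proof -
    have "mu \<le> 1 / (2 * S)" unfolding mu_def by simp
    then have "2 * mu * S \<le> 1" using S mu by (simp add: field_simps)
    then show ?thesis using mu by (simp add: field_simps)
  qed
  have mueps: "mu * (norm vb)\<^sup>2 \<le> \<epsilon>"
  proof -
    have "mu \<le> \<epsilon> / ((norm vb)\<^sup>2 + 1)" unfolding mu_def by simp
    moreover have "(norm vb)\<^sup>2 + 1 > 0" by (simp add: add_nonneg_pos)
    ultimately have "mu * ((norm vb)\<^sup>2 + 1) \<le> \<epsilon>" by (simp add: pos_le_divide_eq)
    moreover have "mu * (norm vb)\<^sup>2 \<le> mu * ((norm vb)\<^sup>2 + 1)" using mu by simp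
    ultimately show ?thesis by linarith
  qed
  have amgm: "inner vb h \<le> (norm h)\<^sup>2 / (2 * mu) + mu * (norm vb)\<^sup>2 / 2" for h :: 'a
  proof -
    have "inner vb h \<le> norm vb * norm h" by (rule norm_cauchy_schwarz)
    moreover have "0 \<le> (norm h - mu * norm vb)\<^sup>2" by simp
    then have "2 * mu * (norm vb * norm h) \<le> (norm h)\<^sup>2 + mu\<^sup>2 * (norm vb)\<^sup>2"
      by (simp add: power2_eq_square algebra_simps)
    then have "norm vb * norm h \<le> (norm h)\<^sup>2 / (2 * mu) + mu * (norm vb)\<^sup>2 / 2"
      using mu by (simp add: field_simps power2_eq_square)
    ultimately show ?thesis by linarith
  qed
  show ?thesis
  proof (intro exI[of _ mu] conjI allI mu)
    fix y
    define h where "h = y - xb"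
    define t where "t = norm h"
    show "f y \<ge> ereal (fb + inner vb (y - xb) - (norm (y - xb))\<^sup>2 / (2 * mu))"
    proof (cases "t < \<rho>")
      case True
      then have yU: "y \<in> U" using w(3) unfolding t_def h_def by (auto simp: dist_norm norm_minus_commute)
      show ?thesis
      proof (cases "f y < f xb + ereal \<epsilon>")
        case True
        have "ereal (fb + inner vb (y - xb) - (norm (y - xb))\<^sup>2 / (2 * mu)) \<le> ereal (fb + inner vb (y - xb))"
          using mu by simp
        also have "\<dots> \<le> \<phi> y" by (rule phi)
        also have "\<dots> \<le> f y" using w(8) yU by blast
        finally show ?thesis .
      next
        case False
        then have fy: "f y \<ge> ereal (fb + \<epsilon>)" using fxb by simp
        have "inner vb (y - xb) - (norm (y - xb))\<^sup>2 / (2 * mu) \<le> \<epsilon>"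
          using amgm[of "y - xb"] mueps w(9) by linarith
        then have "ereal (fb + inner vb (y - xb) - (norm (y - xb))\<^sup>2 / (2 * mu)) \<le> ereal (fb + \<epsilon>)" by simp
        then show ?thesis using fy by (rule order_trans)
      qed
    next
      case False
      then have t\<rho>: "t \<ge> \<rho>" by simp
      have fy: "f y \<ge> ereal (m - (norm (y - x0))\<^sup>2 / (2 * lam0))"
        using pb[rule_format, of y] by (cases "f y") auto
      have n1: "norm (y - x0) \<le> t + A" unfolding t_def h_def A_def
        using norm_triangle_ineq[of "y - xb" "xb - x0"] by simp
      have n2: "(norm (y - x0))\<^sup>2 \<le> 2 * t\<^sup>2 + 2 * A\<^sup>2"
      proof -
        have "(norm (y - x0))\<^sup>2 \<le> (t + A)\<^sup>2" using n1 by (intro power_mono) auto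
        also have "\<dots> \<le> 2 * t\<^sup>2 + 2 * A\<^sup>2" using sum_squares_bound[of t A] by (simp add: power2_eq_square algebra_simps)
        finally show ?thesis .
      qed
      have t0: "t > 0" using t\<rho> w(1) by simp
      have q1: "t\<^sup>2 / \<rho> \<ge> t"
      proof -
        have "t * \<rho> \<le> t * t" using t\<rho> t0 by (intro mult_left_mono) auto
        then show ?thesis using w(1) by (simp add: field_simps power2_eq_square)
      qed
      have q2: "t\<^sup>2 / \<rho>\<^sup>2 \<ge> 1"
      proof -
        have "\<rho>\<^sup>2 \<le> t\<^sup>2" using t\<rho> w(1) by (intro power_mono) auto
        then show ?thesis using w(1) by (simp add: field_simps)
      qed
      have "t\<^sup>2 * S \<le> t\<^sup>2 * (1 / (2 * mu))" using muS by (intro mult_left_mono) auto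
      then have "t\<^sup>2 / (2 * mu) \<ge> S * t\<^sup>2" by (simp add: mult.commute)
      moreover have "S * t\<^sup>2 = t\<^sup>2 / lam0 + (norm vb + 1) * (t\<^sup>2 / \<rho>) + Kc * (t\<^sup>2 / \<rho>\<^sup>2)"
        unfolding S_def by (simp add: algebra_simps)
      moreover have "(norm vb + 1) * (t\<^sup>2 / \<rho>) \<ge> (norm vb + 1) * t" using q1 by (intro mult_left_mono) auto
      moreover have "Kc * (t\<^sup>2 / \<rho>\<^sup>2) \<ge> Kc"
      proof -
        have "Kc \<ge> 0" unfolding Kc_def using lam0 by simp
        then have "Kc * 1 \<le> Kc * (t\<^sup>2 / \<rho>\<^sup>2)" using q2 by (intro mult_left_mono) auto
        then show ?thesis by simp
      qed
      moreover have "(norm vb + 1) * t = norm vb * t + t" by (simp add: algebra_simps)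
      ultimately have big: "t\<^sup>2 / (2 * mu) \<ge> t\<^sup>2 / lam0 + norm vb * t + Kc" using t0 by linarith
      have iv: "inner vb h \<le> norm vb * t" unfolding t_def by (rule norm_cauchy_schwarz)
      have "fb + inner vb h - t\<^sup>2 / (2 * mu) \<le> fb - t\<^sup>2 / lam0 - Kc" using big iv by linarith
      also have "\<dots> \<le> m - (t\<^sup>2 + A\<^sup>2) / lam0" unfolding Kc_def by (simp add: add_divide_distrib)
      also have "\<dots> \<le> m - (norm (y - x0))\<^sup>2 / (2 * lam0)"
      proof -
        have "(norm (y - x0))\<^sup>2 / (2 * lam0) \<le> (2 * t\<^sup>2 + 2 * A\<^sup>2) / (2 * lam0)"
          using n2 lam0 by (intro divide_right_mono) auto
        also have "\<dots> = (t\<^sup>2 + A\<^sup>2) / lam0" using lam0 by (simp add: field_simps)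
        finally show ?thesis by linarith
      qed
      finally show ?thesis using fy unfolding h_def t_def
        by (meson ereal_less_eq(3) order_trans)
    qed
  qed
qed

definition loc_delta :: "real \<Rightarrow> real \<Rightarrow> real \<Rightarrow> real \<Rightarrow> real \<Rightarrow> real" where
  "loc_delta nvb lam \<rho> \<eta> \<epsilon> = min 1 (min (\<rho> / 8) (min (lam * \<eta> / 10) (\<epsilon> / (8 * (nvb + 1 / lam)))))"

lemma loc_point:
  fixes f :: "'a::euclidean_space \<Rightarrow> ereal"
  assumes W: "witness f xb vb U V \<phi> \<epsilon> \<rho> \<eta> \<sigma>" and fxb: "f xb = ereal fb" and pr: "proper_fun f"
    and H: "\<forall>y. f y \<ge> ereal (fb + inner vb (y - xb) - (norm (y - xb))\<^sup>2 / (2 * mu))"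
    and mu: "mu > 0" and lam: "lam > 0" "2 * lam \<le> mu"
    and z: "norm (z - (xb + lam *\<^sub>R vb)) < loc_delta (norm vb) lam \<rho> \<eta> \<epsilon>"
    and y: "y \<in> prox_map lam f z"
  shows "(1 / lam) *\<^sub>R (z - y) \<in> limiting_subdiff \<phi> y \<and> f y = \<phi> y"
proof -
  note w = witnessD[OF W]
  define d where "d = z - (xb + lam *\<^sub>R vb)"
  define \<delta> where "\<delta> = loc_delta (norm vb) lam \<rho> \<eta> \<epsilon>"
  have nd: "norm d < \<delta>" using z unfolding d_def \<delta>_def .
  have d1: "\<delta> \<le> 1" unfolding \<delta>_def loc_delta_def by (rule min.cobounded1)
  have d2: "\<delta> \<le> \<rho> / 8" unfolding \<delta>_def loc_delta_def by (rule min.coboundedI2, rule min.cobounded1)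
  have d3: "\<delta> \<le> lam * \<eta> / 10" unfolding \<delta>_def loc_delta_def
    by (rule min.coboundedI2, rule min.coboundedI2, rule min.cobounded1)
  have d4: "\<delta> \<le> \<epsilon> / (8 * (norm vb + 1 / lam))" unfolding \<delta>_def loc_delta_def
    by (rule min.coboundedI2, rule min.coboundedI2, rule min.cobounded2)
  note \<delta>1 = d1 d2 d3 d4
  have nm: "\<forall>x. f x \<noteq> -\<infinity>" using pr unfolding proper_fun_def by blast
  have le: "f y + ereal ((norm (y - z))\<^sup>2 / (2 * lam)) \<le> ereal (fb + (norm (xb - z))\<^sup>2 / (2 * lam))"
  proof -
    have "f y + ereal ((norm (y - z))\<^sup>2 / (2 * lam)) \<le> f xb + ereal ((norm (xb - z))\<^sup>2 / (2 * lam))"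
      using y unfolding prox_map_def by blast
    then show ?thesis using fxb by simp
  qed
  have b1: "norm (y - xb) \<le> 4 * norm d" unfolding d_def by (rule prox_level_bound(1)[OF H mu lam le])
  have b2: "f y \<le> ereal (fb + 4 * norm d * (norm vb + norm d / lam))" unfolding d_def by (rule prox_level_bound(2)[OF H mu lam le])
  have yU: "y \<in> U"
  proof -
    have "norm (y - xb) < \<rho>" using b1 nd \<delta>1 w(1) by linarith
    then show ?thesis using w(3) by (auto simp: dist_norm norm_minus_commute)
  qed
  have fyl: "f y < f xb + ereal \<epsilon>"
  proof -
    have "norm d / lam \<le> 1 / lam" using nd \<delta>1 lam by (intro divide_right_mono) auto
    then have a: "norm vb + norm d / lam \<le> norm vb + 1 / lam" by simp
    have pos: "norm vb + 1 / lam > 0" using lam by (simp add: add_nonneg_pos)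
    have "4 * norm d * (norm vb + norm d / lam) \<le> 4 * \<delta> * (norm vb + 1 / lam)"
    proof (rule mult_mono)
      show "0 \<le> norm vb + norm d / lam" using lam by simp
    qed (use a nd norm_ge_zero[of d] in linarith)+
    also have "\<dots> \<le> 4 * (\<epsilon> / (8 * (norm vb + 1 / lam))) * (norm vb + 1 / lam)"
      using \<delta>1(4) pos by (intro mult_right_mono) auto
    also have "\<dots> = \<epsilon> / 2" using pos by (simp add: field_simps)
    finally have "4 * norm d * (norm vb + norm d / lam) < \<epsilon>" using w(9) by linarith
    then show ?thesis using b2 fxb by (simp add: le_less_trans)
  qed
  define v where "v = (1 / lam) *\<^sub>R (z - y)"
  have vV: "v \<in> V"
  proof -
    have "v - vb = (1 / lam) *\<^sub>R (d - (y - xb))"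
    proof -
      have "(1 / lam) *\<^sub>R (d - (y - xb)) = (1 / lam) *\<^sub>R (z - y) - (1 / lam) *\<^sub>R (lam *\<^sub>R vb)"
        unfolding d_def by (simp add: algebra_simps)
      also have "(1 / lam) *\<^sub>R (lam *\<^sub>R vb) = vb" using lam by simp
      finally show ?thesis unfolding v_def by simp
    qed
    then have "norm (v - vb) = (1 / lam) * norm (d - (y - xb))" using lam by simp
    also have "\<dots> \<le> (1 / lam) * (norm d + norm (y - xb))" using lam
      by (intro mult_left_mono norm_triangle_ineq4) auto
    also have "\<dots> \<le> (1 / lam) * (5 * norm d)" using b1 lam by (intro mult_left_mono) auto
    also have "\<dots> < (1 / lam) * (5 * \<delta>)" using nd lam by (intro mult_strict_left_mono) auto
    also have "\<dots> \<le> (1 / lam) * (lam * \<eta> / 2)" using \<delta>1(3) lam by (intro mult_left_mono) auto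
    also have "\<dots> < \<eta>" using lam w(2) by simp
    finally show ?thesis using w(4) by (auto simp: dist_norm norm_minus_commute)
  qed
  have "v \<in> prox_subdiff lam f y" unfolding v_def by (rule prox_point_subdiff[OF lam(1) pr y])
  then have "v \<in> limiting_subdiff f y" using prox_frechet[OF lam(1)] nm frechet_limiting by blast
  then show ?thesis using w(10)[OF yU fyl vV] unfolding v_def by blast
qed

lemma loc_mono:
  fixes f :: "'a::euclidean_space \<Rightarrow> ereal"
  assumes W: "witness f xb vb U V \<phi> \<epsilon> \<rho> \<eta> \<sigma>" and fxb: "f xb = ereal fb" and pr: "proper_fun f"
    and H: "\<forall>y. f y \<ge> ereal (fb + inner vb (y - xb) - (norm (y - xb))\<^sup>2 / (2 * mu))"
    and mu: "mu > 0" and lam: "lam > 0" "2 * lam \<le> mu"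
    and z1: "norm (z1 - (xb + lam *\<^sub>R vb)) < loc_delta (norm vb) lam \<rho> \<eta> \<epsilon>"
    and z2: "norm (z2 - (xb + lam *\<^sub>R vb)) < loc_delta (norm vb) lam \<rho> \<eta> \<epsilon>"
    and y1: "y1 \<in> prox_map lam f z1" and y2: "y2 \<in> prox_map lam f z2"
  shows "(1 + lam * \<sigma>) * (norm (y1 - y2))\<^sup>2 \<le> inner (z1 - z2) (y1 - y2)"
proof -
  note w = witnessD[OF W]
  define v1 where "v1 = (1 / lam) *\<^sub>R (z1 - y1)"
  define v2 where "v2 = (1 / lam) *\<^sub>R (z2 - y2)"
  have p1: "v1 \<in> limiting_subdiff \<phi> y1" "f y1 = \<phi> y1"
    using loc_point[OF W fxb pr H mu lam z1 y1] unfolding v1_def by auto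
  have p2: "v2 \<in> limiting_subdiff \<phi> y2" "f y2 = \<phi> y2"
    using loc_point[OF W fxb pr H mu lam z2 y2] unfolding v2_def by auto
  note l1 = limiting_ineq[OF w(7) w(5) w(6) p1(1)]
  note l2 = limiting_ineq[OF w(7) w(5) w(6) p2(1)]
  obtain a1 where a1: "\<phi> y1 = ereal a1" using l1 w(5) by (cases "\<phi> y1") auto
  obtain a2 where a2: "\<phi> y2 = ereal a2" using l2 w(5) by (cases "\<phi> y2") auto
  have i1: "a2 \<ge> a1 + (inner v1 (y2 - y1) + \<sigma> / 2 * (norm (y2 - y1))\<^sup>2)"
    using l1 a1 a2 by (metis ereal_less_eq(3) plus_ereal.simps(1))
  have i2: "a1 \<ge> a2 + (inner v2 (y1 - y2) + \<sigma> / 2 * (norm (y1 - y2))\<^sup>2)"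
    using l2 a1 a2 by (metis ereal_less_eq(3) plus_ereal.simps(1))
  have n: "norm (y2 - y1) = norm (y1 - y2)" by (rule norm_minus_commute)
  have "inner v1 (y2 - y1) + inner v2 (y1 - y2) + \<sigma> * (norm (y1 - y2))\<^sup>2 \<le> 0"
  proof -
    have "\<sigma> / 2 * (norm (y1 - y2))\<^sup>2 + \<sigma> / 2 * (norm (y1 - y2))\<^sup>2 = \<sigma> * (norm (y1 - y2))\<^sup>2" by simp
    then show ?thesis using i1[unfolded n] i2 by linarith
  qed
  moreover have "inner v1 (y2 - y1) + inner v2 (y1 - y2) = - (1 / lam) * (inner (z1 - z2) (y1 - y2) - (norm (y1 - y2))\<^sup>2)"
    unfolding v1_def v2_def
    by (simp add: inner_diff_left inner_diff_right power2_norm_eq_inner algebra_simps inner_commute)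
  ultimately have "\<sigma> * (norm (y1 - y2))\<^sup>2 \<le> (1 / lam) * (inner (z1 - z2) (y1 - y2) - (norm (y1 - y2))\<^sup>2)"
    by linarith
  then have "lam * (\<sigma> * (norm (y1 - y2))\<^sup>2) \<le> lam * ((1 / lam) * (inner (z1 - z2) (y1 - y2) - (norm (y1 - y2))\<^sup>2))"
    using lam by (intro mult_left_mono) auto
  then show ?thesis using lam by (simp add: algebra_simps)
qed

lemma ineq_nonexp:
  fixes u w :: "'a::real_inner"
  assumes "3 * (norm u)\<^sup>2 \<le> (norm w)\<^sup>2 + 2 * inner u w"
  shows "norm u \<le> norm w"
proof (rule ccontr)
  assume "\<not> norm u \<le> norm w"
  then have lt: "norm w < norm u" by simp
  have "inner u w \<le> norm u * norm w" by (metis inner_commute norm_cauchy_schwarz)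
  moreover have "norm w * norm w < norm u * norm u" using lt by (intro mult_strict_mono) auto
  moreover have "norm u * norm w \<le> norm u * norm u" using lt by (intro mult_left_mono) auto
  ultimately have "(norm w)\<^sup>2 + 2 * inner u w < 3 * (norm u)\<^sup>2" by (simp add: power2_eq_square)
  then show False using assms by simp
qed

lemma fb_avg_from_ineq:
  fixes f :: "'a::euclidean_space \<Rightarrow> ereal"
  assumes prox: "\<forall>x\<in>ball xb r. prox_map lam f (x - lam *\<^sub>R G x) = {T x}" and fxp: "T xb = xb"
    and ineq: "\<forall>x\<in>ball xb r. \<forall>y\<in>ball xb r. 3 * (norm (T x - T y))\<^sup>2 \<le> (norm (x - y))\<^sup>2 + 2 * inner (T x - T y) (x - y)"
  shows "fb_averaged_on lam f G (ball xb r)" and "\<forall>x\<in>ball xb r. T x \<in> ball xb r"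
proof -
  have ne: "norm (T x - T y) \<le> norm (x - y)" if "x \<in> ball xb r" "y \<in> ball xb r" for x y
    using ineq that by (intro ineq_nonexp) blast
  show maps: "\<forall>x\<in>ball xb r. T x \<in> ball xb r"
  proof
    fix x assume x: "x \<in> ball xb r"
    have "dist xb x < r" using x by simp
    then have "0 < r" using zero_le_dist[of xb x] by linarith
    then have xb: "xb \<in> ball xb r" by simp
    have "norm (T x - xb) \<le> norm (x - xb)" using ne[OF x xb] fxp by simp
    then show "T x \<in> ball xb r" using x by (simp add: dist_norm norm_minus_commute)
  qed
  define N where "N = (\<lambda>x. (3/2) *\<^sub>R T x - (1/2) *\<^sub>R x)"
  have Nne: "norm (N x - N y) \<le> norm (x - y)" if x: "x \<in> ball xb r" and y: "y \<in> ball xb r" for x y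
  proof -
    define a where "a = T x - T y"
    define c where "c = x - y"
    have e: "N x - N y = (3/2) *\<^sub>R a - (1/2) *\<^sub>R c" unfolding N_def a_def c_def by (simp add: algebra_simps)
    have "(norm (N x - N y))\<^sup>2 = (9/4) * (norm a)\<^sup>2 - (3/2) * inner a c + (1/4) * (norm c)\<^sup>2"
      unfolding e using norm_add_sq[of "(3/2) *\<^sub>R a" "- (1/2) *\<^sub>R c"]
      by (simp add: power_mult_distrib power2_eq_square)
    also have "\<dots> \<le> (norm c)\<^sup>2"
    proof -
      have "3 * (norm a)\<^sup>2 \<le> (norm c)\<^sup>2 + 2 * inner a c" unfolding a_def c_def by (rule ineq[rule_format, OF x y])
      then show ?thesis by linarith
    qed
    finally have "(norm (N x - N y))\<^sup>2 \<le> (norm c)\<^sup>2" .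
    then show ?thesis unfolding c_def by (rule power2_le_imp_le) simp
  qed
  show "fb_averaged_on lam f G (ball xb r)"
    unfolding fb_averaged_on_def
  proof (intro conjI exI[of _ "2/3"] exI[of _ N])
    show "\<forall>x\<in>ball xb r. \<exists>y\<in>ball xb r. prox_map lam f (x - lam *\<^sub>R G x) = {y}" using prox maps by blast
    show "\<forall>x\<in>ball xb r. \<forall>y\<in>ball xb r. norm (N x - N y) \<le> norm (x - y)" using Nne by blast
    have "(1 - 2/3) *\<^sub>R x + (2/3) *\<^sub>R N x = T x" for x
      unfolding N_def by (simp add: algebra_simps)
    then show "\<forall>x\<in>ball xb r. prox_map lam f (x - lam *\<^sub>R G x) = {(1 - 2/3) *\<^sub>R x + (2/3) *\<^sub>R N x}"
      using prox by simp
  qed auto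
qed

lemma avg_iter_conv:
  fixes T :: "'a::euclidean_space \<Rightarrow> 'a"
  assumes maps: "\<forall>x\<in>ball xb r. T x \<in> ball xb r" and fxp: "T xb = xb"
    and ineq: "\<forall>x\<in>ball xb r. \<forall>y\<in>ball xb r. 3 * (norm (T x - T y))\<^sup>2 \<le> (norm (x - y))\<^sup>2 + 2 * inner (T x - T y) (x - y)"
    and x0: "xs 0 \<in> ball xb r" and it: "\<forall>k. xs (Suc k) = T (xs k)"
  shows "\<exists>l\<in>ball xb r. xs \<longlonglongrightarrow> l \<and> T l = l"
proof -
  have inU: "xs k \<in> ball xb r" for k by (induction k) (use x0 maps it in auto)
  have ne: "norm (T x - T y) \<le> norm (x - y)" if "x \<in> ball xb r" "y \<in> ball xb r" for x y
    using ineq that by (intro ineq_nonexp) blast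
  have fej: "(norm (xs (Suc k) - p))\<^sup>2 \<le> (norm (xs k - p))\<^sup>2 - (1/2) * (norm (xs k - xs (Suc k)))\<^sup>2"
    if p: "p \<in> ball xb r" "T p = p" for p k
  proof -
    define a where "a = T (xs k) - p"
    define c where "c = xs k - p"
    have i: "3 * (norm a)\<^sup>2 \<le> (norm c)\<^sup>2 + 2 * inner a c"
      using ineq[rule_format, OF inU[of k] p(1)] p(2) unfolding a_def c_def by simp
    have e: "xs k - xs (Suc k) = c - a" unfolding a_def c_def using it by simp
    have n: "(norm (c - a))\<^sup>2 = (norm c)\<^sup>2 - 2 * inner a c + (norm a)\<^sup>2"
      using norm_add_sq[of c "- a"] by (simp add: inner_commute)
    have g: "(norm a)\<^sup>2 \<le> (norm c)\<^sup>2 - (1/2) * (norm (c - a))\<^sup>2" using n i by linarith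
    have s: "xs (Suc k) - p = a" unfolding a_def using it by simp
    show ?thesis unfolding s e using g unfolding c_def .
  qed
  have "dist xb (xs 0) < r" using x0 by simp
  then have "0 < r" using zero_le_dist[of xb "xs 0"] by linarith
  then have xbU: "xb \<in> ball xb r" by simp
  have dec: "norm (xs (Suc k) - p) \<le> norm (xs k - p)" if p: "p \<in> ball xb r" "T p = p" for p k
  proof -
    have "0 \<le> (1/2) * (norm (xs k - xs (Suc k)))\<^sup>2" by simp
    then have "(norm (xs (Suc k) - p))\<^sup>2 \<le> (norm (xs k - p))\<^sup>2" using fej[OF p, of k] by linarith
    then show ?thesis by (rule power2_le_imp_le) simp
  qed
  have decs: "norm (xs k - p) \<le> norm (xs j - p)" if p: "p \<in> ball xb r" "T p = p" and jk: "j \<le> k" for p j k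
  proof -
    have "decseq (\<lambda>k. norm (xs k - p))" by (rule decseq_SucI) (rule dec[OF p])
    then show ?thesis using jk by (rule decseqD)
  qed
  define R where "R = norm (xs 0 - xb)"
  have R: "R < r" unfolding R_def using x0 by (simp add: dist_norm norm_minus_commute)
  have inC: "xs k \<in> cball xb R" for k
    using decs[OF xbU fxp, of 0 k] unfolding R_def by (simp add: dist_norm norm_minus_commute)
  have CU: "cball xb R \<subseteq> ball xb r" using R by auto
  define D where "D = (\<lambda>k. (norm (xs k - xs (Suc k)))\<^sup>2)"
  have tele: "(\<Sum>k<n. D k) \<le> 2 * ((norm (xs 0 - xb))\<^sup>2 - (norm (xs n - xb))\<^sup>2)" for n
  proof (induction n)
    case (Suc n)
    have "D n \<le> 2 * ((norm (xs n - xb))\<^sup>2 - (norm (xs (Suc n) - xb))\<^sup>2)"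
      using fej[OF xbU fxp, of n] unfolding D_def by simp
    then show ?case using Suc by simp
  qed simp
  have "summable D"
  proof (rule summableI_nonneg_bounded)
    show "0 \<le> D n" for n unfolding D_def by simp
    show "(\<Sum>k<n. D k) \<le> 2 * (norm (xs 0 - xb))\<^sup>2" for n
    proof -
      have a: "(\<Sum>k<n. D k) \<le> 2 * (norm (xs 0 - xb))\<^sup>2 - 2 * (norm (xs n - xb))\<^sup>2"
        using tele[of n] by (simp add: right_diff_distrib)
      have b: "0 \<le> 2 * (norm (xs n - xb))\<^sup>2" by simp
      from a b show ?thesis by linarith
    qed
  qed
  then have "D \<longlonglongrightarrow> 0" by (rule summable_LIMSEQ_zero)
  then have "(\<lambda>k. sqrt (D k)) \<longlonglongrightarrow> sqrt 0" by (intro tendsto_intros)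
  then have step0: "(\<lambda>k. norm (xs k - xs (Suc k))) \<longlonglongrightarrow> 0" unfolding D_def by simp
  have "seq_compact (cball xb R)" by (rule compact_imp_seq_compact) simp
  then obtain l \<sigma> where l: "l \<in> cball xb R" and \<sigma>: "strict_mono \<sigma>" and lim: "(xs \<circ> \<sigma>) \<longlonglongrightarrow> l"
    using inC by (metis seq_compactE)
  have lU: "l \<in> ball xb r" using l CU by blast
  have Tl: "T l = l"
  proof -
    have a: "(\<lambda>k. xs (Suc (\<sigma> k))) \<longlonglongrightarrow> T l"
    proof -
      have "(\<lambda>k. T (xs (\<sigma> k)) - T l) \<longlonglongrightarrow> 0"
      proof (rule Lim_null_comparison)
        show "\<forall>\<^sub>F k in sequentially. norm (T (xs (\<sigma> k)) - T l) \<le> norm (xs (\<sigma> k) - l)"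
          using ne[OF inU lU] by simp
        show "(\<lambda>k. norm (xs (\<sigma> k) - l)) \<longlonglongrightarrow> 0"
          using lim by (simp add: o_def tendsto_norm_zero_iff LIM_zero_iff Lim_null[symmetric])
      qed
      then show ?thesis using it by (simp add: Lim_null[symmetric])
    qed
    have b: "(\<lambda>k. xs (Suc (\<sigma> k))) \<longlonglongrightarrow> l"
    proof -
      have s0: "(\<lambda>k. norm (xs (\<sigma> k) - xs (Suc (\<sigma> k)))) \<longlonglongrightarrow> 0"
        using LIMSEQ_subseq_LIMSEQ[OF step0 \<sigma>] by (simp add: o_def)
      have "(\<lambda>k. xs (\<sigma> k) - (xs (\<sigma> k) - xs (Suc (\<sigma> k)))) \<longlonglongrightarrow> l - 0"
        using lim s0 by (intro tendsto_diff) (auto simp: o_def tendsto_norm_zero_iff)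
      then show ?thesis by simp
    qed
    show ?thesis using LIMSEQ_unique[OF a b] .
  qed
  have "xs \<longlonglongrightarrow> l"
    unfolding lim_sequentially
  proof (intro allI impI)
    fix e :: real assume e: "e > 0"
    obtain K where K: "\<forall>k\<ge>K. dist ((xs \<circ> \<sigma>) k) l < e" using lim e unfolding lim_sequentially by blast
    show "\<exists>N. \<forall>n\<ge>N. dist (xs n) l < e"
    proof (intro exI allI impI)
      fix n assume "\<sigma> K \<le> n"
      then have "norm (xs n - l) \<le> norm (xs (\<sigma> K) - l)" by (rule decs[OF lU Tl])
      moreover have "dist (xs (\<sigma> K)) l < e" using K by simp
      ultimately show "dist (xs n) l < e" by (simp add: dist_norm)
    qed
  qed
  then show ?thesis using lU Tl by blast
qed

lemma contr_conv:
  fixes T :: "'a::euclidean_space \<Rightarrow> 'a"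
  assumes ctr: "\<forall>x\<in>ball xb r. norm (T x - xb) \<le> c * norm (x - xb)" and c: "0 \<le> c" "c < 1"
    and x0: "xs 0 \<in> ball xb r" and it: "\<forall>k. xs (Suc k) = T (xs k)"
  shows "xs \<longlonglongrightarrow> xb \<and> (\<forall>k. norm (xs (Suc k) - xb) \<le> c * norm (xs k - xb))"
proof -
  have inU: "xs k \<in> ball xb r" for k
  proof (induction k)
    case (Suc k)
    have "norm (T (xs k) - xb) \<le> c * norm (xs k - xb)" using ctr Suc by blast
    also have "\<dots> \<le> norm (xs k - xb)" using c by (simp add: mult_left_le_one_le)
    finally show ?case using Suc it by (simp add: dist_norm norm_minus_commute)
  qed (use x0 in simp)
  have st: "norm (xs (Suc k) - xb) \<le> c * norm (xs k - xb)" for k using ctr inU it by simp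
  have pw: "norm (xs k - xb) \<le> c ^ k * norm (xs 0 - xb)" for k
  proof (induction k)
    case (Suc k)
    have "norm (xs (Suc k) - xb) \<le> c * norm (xs k - xb)" by (rule st)
    also have "\<dots> \<le> c * (c ^ k * norm (xs 0 - xb))" using Suc c by (intro mult_left_mono) auto
    finally show ?case by simp
  qed simp
  have "(\<lambda>k. xs k - xb) \<longlonglongrightarrow> 0"
  proof (rule Lim_null_comparison)
    show "\<forall>\<^sub>F k in sequentially. norm (xs k - xb) \<le> c ^ k * norm (xs 0 - xb)" using pw by simp
    show "(\<lambda>k. c ^ k * norm (xs 0 - xb)) \<longlonglongrightarrow> 0"
      using c by (intro tendsto_mult_left_zero LIMSEQ_power_zero) auto
  qed
  then show ?thesis using st by (simp add: Lim_null[symmetric])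
qed

lemma fwd_nonexp:
  fixes G :: "'a::real_inner \<Rightarrow> 'a"
  assumes coc: "\<forall>x y. inner (G x - G y) (x - y) \<ge> \<beta> * (norm (G x - G y))\<^sup>2"
    and lam: "0 < lam" "lam \<le> \<beta>"
  shows "norm ((x - lam *\<^sub>R G x) - (y - lam *\<^sub>R G y)) \<le> norm (x - y)"
proof -
  define u where "u = x - y"
  define gg where "gg = G x - G y"
  have e: "(x - lam *\<^sub>R G x) - (y - lam *\<^sub>R G y) = u - lam *\<^sub>R gg" unfolding u_def gg_def by (simp add: algebra_simps)
  have n: "(norm (u - lam *\<^sub>R gg))\<^sup>2 = (norm u)\<^sup>2 - 2 * lam * inner gg u + lam\<^sup>2 * (norm gg)\<^sup>2"
    using norm_add_sq[of u "- lam *\<^sub>R gg"] by (simp add: inner_commute power_mult_distrib)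
  have c: "inner gg u \<ge> \<beta> * (norm gg)\<^sup>2" using coc unfolding gg_def u_def by blast
  have "lam\<^sup>2 * (norm gg)\<^sup>2 \<le> lam * \<beta> * (norm gg)\<^sup>2"
    using lam by (intro mult_right_mono) (auto simp: power2_eq_square)
  moreover have "lam * \<beta> * (norm gg)\<^sup>2 \<le> lam * inner gg u" using c lam by (simp add: mult.assoc)
  moreover have "0 \<le> lam * inner gg u"
  proof -
    have "0 \<le> \<beta> * (norm gg)\<^sup>2" using lam by simp
    then have "0 \<le> inner gg u" using c by linarith
    then show ?thesis using lam by simp
  qed
  ultimately have "(norm (u - lam *\<^sub>R gg))\<^sup>2 \<le> (norm u)\<^sup>2" using n by linarith
  then show ?thesis unfolding e u_def by (rule power2_le_imp_le) simp
qed

lemma avg_ineq: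
  fixes u t gg :: "'a::real_inner"
  assumes firm: "(norm t)\<^sup>2 \<le> inner (u - lam *\<^sub>R gg) t"
    and coc: "inner gg u \<ge> \<beta> * (norm gg)\<^sup>2" and lam: "0 < lam" "lam \<le> \<beta>"
  shows "3 * (norm t)\<^sup>2 \<le> (norm u)\<^sup>2 + 2 * inner t u"
proof -
  have f1: "(norm t)\<^sup>2 \<le> inner u t - lam * inner gg t" using firm by (simp add: inner_diff_left)
  have n1: "(norm (u - t))\<^sup>2 = (norm u)\<^sup>2 - 2 * inner t u + (norm t)\<^sup>2"
    using norm_add_sq[of u "- t"] by (simp add: inner_commute)
  have n2: "(norm (u - t - (2 * lam) *\<^sub>R gg))\<^sup>2 = (norm (u - t))\<^sup>2 - 4 * lam * inner gg u + 4 * lam * inner gg t + 4 * lam\<^sup>2 * (norm gg)\<^sup>2"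
    using norm_add_sq[of "u - t" "- (2 * lam) *\<^sub>R gg"]
    by (simp add: inner_commute inner_diff_right power_mult_distrib algebra_simps)
  have "lam\<^sup>2 * (norm gg)\<^sup>2 \<le> lam * \<beta> * (norm gg)\<^sup>2"
    using lam by (intro mult_right_mono) (auto simp: power2_eq_square)
  moreover have "lam * \<beta> * (norm gg)\<^sup>2 \<le> lam * inner gg u" using coc lam by (simp add: mult.assoc)
  moreover have "0 \<le> (norm (u - t - (2 * lam) *\<^sub>R gg))\<^sup>2" by simp
  moreover have "inner u t = inner t u" by (rule inner_commute)
  ultimately show ?thesis using f1 n1 n2 by linarith
qed

lemma strong_bound:
  fixes a b :: "'a::real_inner"
  assumes "(1 + k) * (norm a)\<^sup>2 \<le> inner b a" and "k \<ge> 0"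
  shows "norm a \<le> (1 / (1 + k)) * norm b"
proof (cases "a = 0")
  case True then show ?thesis using assms by simp
next
  case False
  have "((1 + k) * norm a) * norm a \<le> norm b * norm a"
    using assms(1) norm_cauchy_schwarz[of b a] by (simp add: power2_eq_square mult.assoc)
  moreover have "norm a > 0" using False by simp
  ultimately have "(1 + k) * norm a \<le> norm b" by (rule mult_right_le_imp_le)
  then show ?thesis using assms(2) by (simp add: field_simps add_nonneg_pos)
qed

lemma witness_sigma:
  assumes "witness f xb vb U V \<phi> \<epsilon> \<rho> \<eta> \<sigma>" "\<sigma>' \<ge> 0" "ereal_strongly_convex \<sigma>' \<phi>"
  shows "witness f xb vb U V \<phi> \<epsilon> \<rho> \<eta> \<sigma>'"
  using assms unfolding witness_def by blast

lemma loc_delta_pos: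
  assumes "lam > 0" "\<rho> > 0" "\<eta> > 0" "\<epsilon> > 0" "nvb \<ge> 0"
  shows "loc_delta nvb lam \<rho> \<eta> \<epsilon> > 0"
  using assms unfolding loc_delta_def by (simp add: add_nonneg_pos)

theorem mainTheorem4:
  fixes f :: "'a::euclidean_space \<Rightarrow> ereal" and g :: "'a \<Rightarrow> real"
    and G :: "'a \<Rightarrow> 'a" and xb :: 'a
  assumes f_proper: "proper_fun f" and f_lsc: "lsc_fun f"
    and f_pb: "prox_bounded f" and f_thr: "prox_threshold f > 0"
    and g_convex: "convex_on UNIV g"
    and g_grad: "\<And>x. (g has_derivative (\<lambda>h. inner (G x) h)) (at x)"
    and G_lip: "\<exists>L. \<forall>x y. norm (G x - G y) \<le> L * norm (x - y)"
    and vc: "var_convex f xb (- G xb)"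
  shows "(\<exists>\<delta>>0. \<forall>x. norm (x - xb) < \<delta> \<longrightarrow> f xb + ereal (g xb) \<le> f x + ereal (g x))
    \<and> (\<exists>lamb. 0 < lamb \<and> ereal lamb \<le> prox_threshold f \<and>
        (\<forall>lam. 0 < lam \<and> lam < lamb \<longrightarrow>
          (\<exists>U. xb \<in> interior U \<and> fb_averaged_on lam f G U \<and>
                prox_map lam f (xb - lam *\<^sub>R G xb) = {xb} \<and>
                (\<forall>xs. xs 0 \<in> U \<and> fb_seq lam f G xs \<longrightarrow>
                   (\<exists>xst\<in>U. xs \<longlonglongrightarrow> xst \<and> - G xst \<in> prox_subdiff lam f xst)) \<and>
                (var_strongly_convex f xb (- G xb) \<longrightarrow>
                   (\<exists>U'. U' \<subseteq> U \<and> xb \<in> interior U' \<and> fb_averaged_on lam f G U' \<and>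
                      (\<exists>c. 0 \<le> c \<and> c < 1 \<and>
                         (\<forall>xs. xs 0 \<in> U' \<and> fb_seq lam f G xs \<longrightarrow>
                            xs \<longlonglongrightarrow> xb \<and>
                            (\<forall>k. norm (xs (Suc k) - xb) \<le> c * norm (xs k - xb)))))))))"
proof -
  define vb where "vb = - G xb"
  have nm: "\<forall>x. f x \<noteq> -\<infinity>" using f_proper unfolding proper_fun_def by blast
  have vcw: "var_convex_with ereal_convex f xb vb" using vc unfolding var_convex_def vb_def .
  have QS: "\<exists>\<sigma>\<ge>0. ereal_strongly_convex \<sigma> \<phi>" if "ereal_convex \<phi>" for \<phi> :: "'a \<Rightarrow> ereal"
    by (rule exI[of _ 0]) (use that in \<open>simp add: ereal_strongly_convex_def\<close>)
  obtain U V \<phi> \<epsilon> \<rho> \<eta> \<sigma> where W: "witness f xb vb U V \<phi> \<epsilon> \<rho> \<eta> \<sigma>"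
    using vc_unpack[OF vcw QS nm] by blast
  note w = witnessD[OF W]
  obtain fb where fxb: "f xb = ereal fb" using w(11) nm by (cases "f xb") auto
  obtain lam0 x0 where lam0: "lam0 > 0" and me: "moreau_env lam0 f x0 > -\<infinity>"
    using f_pb unfolding prox_bounded_def by blast
  define m where "m = (if moreau_env lam0 f x0 = \<infinity> then 0 else real_of_ereal (moreau_env lam0 f x0))"
  have mle: "ereal m \<le> moreau_env lam0 f x0" using me unfolding m_def by (cases "moreau_env lam0 f x0") auto
  have pb: "\<forall>y. ereal m \<le> f y + ereal ((norm (y - x0))\<^sup>2 / (2 * lam0))"
  proof
    fix y
    have "moreau_env lam0 f x0 \<le> f y + ereal ((norm (y - x0))\<^sup>2 / (2 * lam0))"
      unfolding moreau_env_def by (rule INF_lower) simp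
    then show "ereal m \<le> f y + ereal ((norm (y - x0))\<^sup>2 / (2 * lam0))" using mle by simp
  qed
  have thr: "ereal lam0 \<le> prox_threshold f" unfolding prox_threshold_def
    by (rule Sup_upper) (use lam0 me in blast)
  obtain mu where mu: "mu > 0" and H: "\<forall>y. f y \<ge> ereal (fb + inner vb (y - xb) - (norm (y - xb))\<^sup>2 / (2 * mu))"
    using global_H[OF W fxb pb lam0] by blast
  obtain \<beta> where \<beta>: "\<beta> > 0" and coc: "\<forall>x y. inner (G x - G y) (x - y) \<ge> \<beta> * (norm (G x - G y))\<^sup>2"
    using cocoercive[OF g_convex g_grad G_lip] by blast
  have phi_b: "f x \<ge> ereal (fb + inner vb (x - xb))" if xU: "x \<in> U" and fx: "f x < f xb + ereal \<epsilon>" for x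
  proof -
    have "\<phi> x \<ge> \<phi> xb + ereal (inner vb (x - xb) + \<sigma> / 2 * (norm (x - xb))\<^sup>2)"
      using limiting_ineq[OF w(7) w(5) w(6) w(12)] by blast
    moreover have "ereal (fb + inner vb (x - xb)) \<le> \<phi> xb + ereal (inner vb (x - xb) + \<sigma> / 2 * (norm (x - xb))\<^sup>2)"
      using w(13) fxb w(6) by simp
    moreover have "\<phi> x \<le> f x" using w(8) xU by blast
    ultimately show ?thesis by (meson order_trans)
  qed
  have part1: "\<exists>\<delta>>0. \<forall>x. norm (x - xb) < \<delta> \<longrightarrow> f xb + ereal (g xb) \<le> f x + ereal (g x)"
  proof (intro exI[of _ "min \<rho> (\<epsilon> / (norm (G xb) + 1))"] conjI allI impI)
    show "0 < min \<rho> (\<epsilon> / (norm (G xb) + 1))" using w(1) w(9) by (simp add: add_nonneg_pos)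
    fix x assume x: "norm (x - xb) < min \<rho> (\<epsilon> / (norm (G xb) + 1))"
    have gx: "g x \<ge> g xb + inner (G xb) (x - xb)" by (rule first_order_convex[OF g_convex g_grad])
    have xU: "x \<in> U" using x w(3) by (auto simp: dist_norm norm_minus_commute)
    show "f xb + ereal (g xb) \<le> f x + ereal (g x)"
    proof (cases "f x < f xb + ereal \<epsilon>")
      case True
      have fx: "f x \<ge> ereal (fb + inner vb (x - xb))" by (rule phi_b[OF xU True])
      have "ereal (fb + g xb) \<le> ereal (fb + inner vb (x - xb) + g x)" using gx unfolding vb_def by simp
      also have "\<dots> \<le> f x + ereal (g x)" using fx by (metis add_right_mono plus_ereal.simps(1))
      finally show ?thesis using fxb by simp
    next
      case False
      then have fx: "f x \<ge> ereal (fb + \<epsilon>)" using fxb by simp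
      have "\<bar>inner (G xb) (x - xb)\<bar> \<le> norm (G xb) * norm (x - xb)" by (rule Cauchy_Schwarz_ineq2)
      also have "\<dots> \<le> (norm (G xb) + 1) * (\<epsilon> / (norm (G xb) + 1))"
        using x by (intro mult_mono) auto
      also have "\<dots> = \<epsilon>"
      proof -
        have "norm (G xb) + 1 \<noteq> 0" using norm_ge_zero[of "G xb"] by linarith
        then show ?thesis by simp
      qed
      finally have "g x \<ge> g xb - \<epsilon>" using gx by linarith
      then have "ereal (fb + g xb) \<le> ereal (fb + \<epsilon> + g x)" by simp
      also have "\<dots> \<le> f x + ereal (g x)" using fx by (metis add_right_mono plus_ereal.simps(1))
      finally show ?thesis using fxb by simp
    qed
  qed
  define lamb where "lamb = min (min (mu / 2) \<beta>) lam0"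
  have lamb: "0 < lamb" unfolding lamb_def using mu \<beta> lam0 by simp
  have lamb_thr: "ereal lamb \<le> prox_threshold f"
    using thr unfolding lamb_def by (meson ereal_less_eq(3) min.cobounded2 order_trans)
  have part2: "\<exists>U. xb \<in> interior U \<and> fb_averaged_on lam f G U \<and>
                prox_map lam f (xb - lam *\<^sub>R G xb) = {xb} \<and>
                (\<forall>xs. xs 0 \<in> U \<and> fb_seq lam f G xs \<longrightarrow>
                   (\<exists>xst\<in>U. xs \<longlonglongrightarrow> xst \<and> - G xst \<in> prox_subdiff lam f xst)) \<and>
                (var_strongly_convex f xb (- G xb) \<longrightarrow>
                   (\<exists>U'. U' \<subseteq> U \<and> xb \<in> interior U' \<and> fb_averaged_on lam f G U' \<and>
                      (\<exists>c. 0 \<le> c \<and> c < 1 \<and>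
                         (\<forall>xs. xs 0 \<in> U' \<and> fb_seq lam f G xs \<longrightarrow>
                            xs \<longlonglongrightarrow> xb \<and>
                            (\<forall>k. norm (xs (Suc k) - xb) \<le> c * norm (xs k - xb))))))"
    if lam: "0 < lam" "lam < lamb" for lam
  proof -
    have lam2: "2 * lam \<le> mu" "lam \<le> \<beta>" using lam unfolding lamb_def by auto
    define zb where "zb = xb + lam *\<^sub>R vb"
    have zb': "xb - lam *\<^sub>R G xb = zb" unfolding zb_def vb_def by simp
    define P where "P = (\<lambda>z. SOME y. y \<in> prox_map lam f z)"
    have Pm: "P z \<in> prox_map lam f z" for z
      unfolding P_def using prox_exists[OF f_lsc nm fxb H mu lam(1) lam2(1)] by (simp add: some_in_eq)
    have pzb: "prox_map lam f zb = {xb}" unfolding zb_def by (rule prox_at_zb[OF fxb H mu lam(1) lam2(1)])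
    define T where "T = (\<lambda>x. P (x - lam *\<^sub>R G x))"
    have Txb: "T xb = xb" using Pm[of zb] pzb zb' unfolding T_def by simp
    have fwd: "norm ((x - lam *\<^sub>R G x) - zb) \<le> norm (x - xb)" for x
      using fwd_nonexp[OF coc lam(1) lam2(2), of x xb] zb' by simp
    define \<delta>1 where "\<delta>1 = loc_delta (norm vb) lam \<rho> \<eta> \<epsilon>"
    have \<delta>1: "\<delta>1 > 0" unfolding \<delta>1_def using loc_delta_pos lam w by simp
    have mono1: "(1 + lam * \<sigma>) * (norm (y1 - y2))\<^sup>2 \<le> inner (z1 - z2) (y1 - y2)"
      if "norm (z1 - zb) < \<delta>1" "norm (z2 - zb) < \<delta>1" "y1 \<in> prox_map lam f z1" "y2 \<in> prox_map lam f z2"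
      for z1 z2 y1 y2
      using loc_mono[OF W fxb f_proper H mu lam(1) lam2(1)] that unfolding \<delta>1_def zb_def by blast
    have firm: "(norm (y1 - y2))\<^sup>2 \<le> inner (z1 - z2) (y1 - y2)"
      if "norm (z1 - zb) < \<delta>1" "norm (z2 - zb) < \<delta>1" "y1 \<in> prox_map lam f z1" "y2 \<in> prox_map lam f z2"
      for z1 z2 y1 y2
    proof -
      have "(norm (y1 - y2))\<^sup>2 \<le> (1 + lam * \<sigma>) * (norm (y1 - y2))\<^sup>2"
        using lam w(6) by (simp add: mult_right_mono add_increasing2 distrib_right)
      then show ?thesis using mono1[OF that] by linarith
    qed
    have uniq: "prox_map lam f z = {P z}" if "norm (z - zb) < \<delta>1" for z
    proof -
      have "y = P z" if y: "y \<in> prox_map lam f z" for y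
      proof -
        have "(norm (y - P z))\<^sup>2 \<le> 0" using firm[OF \<open>norm (z - zb) < \<delta>1\<close> \<open>norm (z - zb) < \<delta>1\<close> y Pm] by simp
        then show ?thesis by simp
      qed
      then show ?thesis using Pm[of z] by blast
    qed
    define U0 where "U0 = ball xb \<delta>1"
    have inz: "norm ((x - lam *\<^sub>R G x) - zb) < \<delta>1" if "x \<in> ball xb r" "r \<le> \<delta>1" for x r
      using fwd[of x] that by (simp add: dist_norm norm_minus_commute)
    have proxU: "\<forall>x\<in>ball xb r. prox_map lam f (x - lam *\<^sub>R G x) = {T x}" if "r \<le> \<delta>1" for r
      using uniq inz that unfolding T_def by blast
    have ineqU: "\<forall>x\<in>ball xb r. \<forall>y\<in>ball xb r. 3 * (norm (T x - T y))\<^sup>2 \<le> (norm (x - y))\<^sup>2 + 2 * inner (T x - T y) (x - y)"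
      if "r \<le> \<delta>1" for r
    proof (intro ballI)
      fix x y assume x: "x \<in> ball xb r" and y: "y \<in> ball xb r"
      have f: "(norm (T x - T y))\<^sup>2 \<le> inner ((x - y) - lam *\<^sub>R (G x - G y)) (T x - T y)"
        using firm[OF inz[OF x that] inz[OF y that] Pm Pm] unfolding T_def by (simp add: algebra_simps)
      show "3 * (norm (T x - T y))\<^sup>2 \<le> (norm (x - y))\<^sup>2 + 2 * inner (T x - T y) (x - y)"
        by (rule avg_ineq[OF f _ lam(1) lam2(2)]) (use coc in blast)
    qed
    have avgU: "fb_averaged_on lam f G (ball xb r)" "\<forall>x\<in>ball xb r. T x \<in> ball xb r" if "r \<le> \<delta>1" for r
      using fb_avg_from_ineq[OF proxU[OF that] Txb ineqU[OF that]] by auto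
    have seqT: "\<forall>k. xs (Suc k) = T (xs k)" if "xs 0 \<in> ball xb r" "fb_seq lam f G xs" "r \<le> \<delta>1" for xs r
    proof -
      have "xs k \<in> ball xb r \<and> xs (Suc k) = T (xs k)" for k
      proof (induction k)
        case 0
        have "prox_map lam f (xs 0 - lam *\<^sub>R G (xs 0)) = {xs (Suc 0)}" using that(2) unfolding fb_seq_def by blast
        then show ?case using proxU[OF that(3)] that(1) by auto
      next
        case (Suc k)
        then have a: "xs (Suc k) \<in> ball xb r" using avgU(2)[OF that(3)] by auto
        have "prox_map lam f (xs (Suc k) - lam *\<^sub>R G (xs (Suc k))) = {xs (Suc (Suc k))}" using that(2) unfolding fb_seq_def by blast
        then show ?case using proxU[OF that(3)] a by auto
      qed
      then show ?thesis by blast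
    qed
    show ?thesis
    proof (intro exI[of _ U0] conjI)
      show "xb \<in> interior U0" unfolding U0_def using \<delta>1 by simp
      show "fb_averaged_on lam f G U0" unfolding U0_def by (rule avgU(1)) simp
      show "prox_map lam f (xb - lam *\<^sub>R G xb) = {xb}" using pzb zb' by simp
      show "\<forall>xs. xs 0 \<in> U0 \<and> fb_seq lam f G xs \<longrightarrow> (\<exists>xst\<in>U0. xs \<longlonglongrightarrow> xst \<and> - G xst \<in> prox_subdiff lam f xst)"
      proof (intro allI impI)
        fix xs assume a: "xs 0 \<in> U0 \<and> fb_seq lam f G xs"
        have it: "\<forall>k. xs (Suc k) = T (xs k)" using seqT[of xs \<delta>1] a unfolding U0_def by simp
        obtain l where l: "l \<in> ball xb \<delta>1" "xs \<longlonglongrightarrow> l" "T l = l"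
          using avg_iter_conv[OF avgU(2)[of \<delta>1] Txb ineqU[of \<delta>1] _ it] a unfolding U0_def by auto
        have "prox_map lam f (l - lam *\<^sub>R G l) = {l}" using proxU[of \<delta>1] l by simp
        then have "l \<in> prox_map lam f (l - lam *\<^sub>R G l)" by simp
        from prox_point_subdiff[OF lam(1) f_proper this]
        have "- G l \<in> prox_subdiff lam f l" using lam by simp
        then show "\<exists>xst\<in>U0. xs \<longlonglongrightarrow> xst \<and> - G xst \<in> prox_subdiff lam f xst" using l unfolding U0_def by blast
      qed
      show "var_strongly_convex f xb (- G xb) \<longrightarrow>
              (\<exists>U'. U' \<subseteq> U0 \<and> xb \<in> interior U' \<and> fb_averaged_on lam f G U' \<and>
                 (\<exists>c. 0 \<le> c \<and> c < 1 \<and>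
                    (\<forall>xs. xs 0 \<in> U' \<and> fb_seq lam f G xs \<longrightarrow>
                       xs \<longlonglongrightarrow> xb \<and> (\<forall>k. norm (xs (Suc k) - xb) \<le> c * norm (xs k - xb)))))"
      proof
        assume vsc: "var_strongly_convex f xb (- G xb)"
        have vcw2: "var_convex_with (\<lambda>\<phi>. \<exists>\<sigma>>0. ereal_strongly_convex \<sigma> \<phi>) f xb vb"
          using vsc unfolding var_strongly_convex_def vb_def .
        have QS2: "\<exists>\<sigma>\<ge>0. ereal_strongly_convex \<sigma> \<phi>" if "\<exists>\<sigma>>0. ereal_strongly_convex \<sigma> \<phi>" for \<phi> :: "'a \<Rightarrow> ereal"
          using that by (auto intro: less_imp_le)
        obtain U2 V2 \<phi>2 \<epsilon>2 \<rho>2 \<eta>2 \<sigma>0 where Q2: "\<exists>\<sigma>>0. ereal_strongly_convex \<sigma> \<phi>2"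
          and W0: "witness f xb vb U2 V2 \<phi>2 \<epsilon>2 \<rho>2 \<eta>2 \<sigma>0"
          using vc_unpack[OF vcw2 QS2 nm] by blast
        obtain \<sigma>2 where \<sigma>2: "\<sigma>2 > 0" "ereal_strongly_convex \<sigma>2 \<phi>2" using Q2 by blast
        have W2: "witness f xb vb U2 V2 \<phi>2 \<epsilon>2 \<rho>2 \<eta>2 \<sigma>2" using witness_sigma[OF W0 _ \<sigma>2(2)] \<sigma>2 by simp
        note w2 = witnessD[OF W2]
        define \<delta>2 where "\<delta>2 = loc_delta (norm vb) lam \<rho>2 \<eta>2 \<epsilon>2"
        have \<delta>2: "\<delta>2 > 0" unfolding \<delta>2_def using loc_delta_pos lam w2 by simp
        define r' where "r' = min \<delta>1 \<delta>2"
        have r': "r' > 0" "r' \<le> \<delta>1" "r' \<le> \<delta>2" unfolding r'_def using \<delta>1 \<delta>2 by auto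
        define c where "c = 1 / (1 + lam * \<sigma>2)"
        have c: "0 \<le> c" "c < 1" unfolding c_def using lam \<sigma>2 by (auto simp: field_simps add_pos_pos)
        have ctr: "\<forall>x\<in>ball xb r'. norm (T x - xb) \<le> c * norm (x - xb)"
        proof
          fix x assume x: "x \<in> ball xb r'"
          have "norm (x - xb) < r'" using x by (simp add: dist_norm norm_minus_commute)
          then have zx: "norm ((x - lam *\<^sub>R G x) - zb) < \<delta>2" using fwd[of x] r'(3) by linarith
          have z0: "norm (zb - zb) < \<delta>2" using \<delta>2 by simp
          have xbp: "xb \<in> prox_map lam f zb" using pzb by simp
          have "(1 + lam * \<sigma>2) * (norm (T x - xb))\<^sup>2 \<le> inner ((x - lam *\<^sub>R G x) - zb) (T x - xb)"
            using loc_mono[OF W2 fxb f_proper H mu lam(1) lam2(1) _ _ Pm xbp] zx z0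
            unfolding \<delta>2_def zb_def T_def by blast
          then have "norm (T x - xb) \<le> c * norm ((x - lam *\<^sub>R G x) - zb)"
            unfolding c_def using lam \<sigma>2 by (intro strong_bound) auto
          also have "\<dots> \<le> c * norm (x - xb)" using fwd[of x] c by (intro mult_left_mono) auto
          finally show "norm (T x - xb) \<le> c * norm (x - xb)" .
        qed
        show "\<exists>U'. U' \<subseteq> U0 \<and> xb \<in> interior U' \<and> fb_averaged_on lam f G U' \<and>
                 (\<exists>c. 0 \<le> c \<and> c < 1 \<and>
                    (\<forall>xs. xs 0 \<in> U' \<and> fb_seq lam f G xs \<longrightarrow>
                       xs \<longlonglongrightarrow> xb \<and> (\<forall>k. norm (xs (Suc k) - xb) \<le> c * norm (xs k - xb))))"
        proof (intro exI[of _ "ball xb r'"] conjI exI[of _ c] allI impI)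
          show "ball xb r' \<subseteq> U0" unfolding U0_def using r' by auto
          show "xb \<in> interior (ball xb r')" using r' by simp
          show "fb_averaged_on lam f G (ball xb r')" by (rule avgU(1)[OF r'(2)])
          show "0 \<le> c" "c < 1" using c by auto
          fix xs assume a: "xs 0 \<in> ball xb r' \<and> fb_seq lam f G xs"
          have it: "\<forall>k. xs (Suc k) = T (xs k)" using seqT[of xs r'] a r' by simp
          have res: "xs \<longlonglongrightarrow> xb \<and> (\<forall>k. norm (xs (Suc k) - xb) \<le> c * norm (xs k - xb))"
            using contr_conv[OF ctr c(1) c(2) _ it] a by blast
          show "xs \<longlonglongrightarrow> xb" using res by blast
          show "norm (xs (Suc k) - xb) \<le> c * norm (xs k - xb)" for k using res by blast
        qed
      qed
    qed
  qed
  show ?thesis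
    using part1 lamb lamb_thr part2 by blast
qed

end
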